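(* Let $a$ be a real symmetric $n\times n$ matrix with $a\in\Gamma_k^+$, let $s>0$ and $X\in\mathbb R^n$, and set $E=s\,a-X\otimes X$. If $\sigma_k(E)>0$, then $E\in\Gamma_k^+$. More precisely, setting $f_i=s^{1-i}\sigma_i(E)=s\,\sigma_i(a)-\langle T_{i-1}(a),X\otimes X\rangle$, one has for all $2\le i\le k$ $$\sigma_{i-1}(E)\ \ge\ f_i\,\sigma_i(a)^{-1}\sigma_{i-1}(a)\,s^{i-2}.$$ (In the application, $a=A_u$, $s=u_{tt}$, $X=\nabla u_t$, $E=E_u=u_{tt}A_u-\nabla u_t\otimes\nabla u_t$.)
   Context: $\sigma_j$ is the $j$-th elementary symmetric function of the eigenvalues, $\Gamma_k^+=\{S:\sigma_j(S)>0,\ 1\le j\le k\}$, $T_j(S)=\sum_{i=0}^{j}(-1)^i\sigma_{j-i}(S)S^i$ is the Newton transformation, and $\langle S_1,S_2\rangle=\mathrm{tr}(S_1S_2)$. *)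

theory Defs
  imports "Jordan_Normal_Form.Char_Poly"
begin

text \<open>Elementary symmetric functions of the eigenvalues of an n x n matrix S,
  read off from the characteristic polynomial
  det(t I - S) = prod_i (t - lambda_i) = sum_j (-1)^j sigma_j(lambda) t^(n-j).\<close>
definition sigma :: "nat \<Rightarrow> real mat \<Rightarrow> real" where
  "sigma j S = (if j \<le> dim_row S then (-1) ^ j * coeff (char_poly S) (dim_row S - j) else 0)"

definition Gamma_plus :: "nat \<Rightarrow> nat \<Rightarrow> real mat set" where
  "Gamma_plus n k = {S \<in> carrier_mat n n. \<forall>j. 1 \<le> j \<and> j \<le> k \<longrightarrow> sigma j S > 0}"

definition symmetric_mat :: "nat \<Rightarrow> real mat \<Rightarrow> bool" where
  "symmetric_mat n S \<longleftrightarrow> S \<in> carrier_mat n n \<and> transpose_mat S = S"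

definition newton_T :: "nat \<Rightarrow> real mat \<Rightarrow> real mat" where
  "newton_T j S = foldr (\<lambda>i M. (((-1) ^ i * sigma (j - i) S) \<cdot>\<^sub>m (S ^\<^sub>m i)) + M)
      [0..<Suc j] (0\<^sub>m (dim_row S) (dim_row S))"

definition mat_trace :: "real mat \<Rightarrow> real" where
  "mat_trace S = (\<Sum>i<dim_row S. S $$ (i, i))"

definition mat_inner :: "real mat \<Rightarrow> real mat \<Rightarrow> real" where
  "mat_inner S1 S2 = mat_trace (S1 * S2)"

definition outer :: "real vec \<Rightarrow> real mat" where
  "outer X = mat (dim_vec X) (dim_vec X) (\<lambda>(i, j). X $ i * X $ j)"

end

theory Submission
  imports Defs "Jordan_Normal_Form.Schur_Decomposition"
begin

definition rr :: "real poly \<Rightarrow> bool" where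
  "rr p \<longleftrightarrow> (\<exists>c rs. p = Polynomial.smult c (\<Prod>r\<leftarrow>rs. [:-r,1:]))"

lemma rr_0: "rr 0" unfolding rr_def by (rule exI[of _ 0], auto)

lemma rr_lin: "rr p \<Longrightarrow> rr ([:-a,1:] * p)"
proof -
  assume "rr p"
  then obtain c rs where p: "p = Polynomial.smult c (\<Prod>r\<leftarrow>rs. [:-r,1:])" unfolding rr_def by auto
  show ?thesis unfolding rr_def
    by (rule exI[of _ c], rule exI[of _ "a # rs"], simp add: p mult_smult_right)
qed

lemma rr_smult: "rr p \<Longrightarrow> rr (Polynomial.smult d p)"
proof -
  assume "rr p"
  then obtain c rs where p: "p = Polynomial.smult c (\<Prod>r\<leftarrow>rs. [:-r,1:])" unfolding rr_def by auto
  show ?thesis unfolding rr_def p by (rule exI[of _ "d * c"], rule exI[of _ rs], simp)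
qed

lemma rr_mult_one_lin: "rr p \<Longrightarrow> rr ([:1, a:] * p)"
proof (cases "a = 0")
  case True
  assume "rr p" thus ?thesis using True by (simp add: one_pCons[symmetric])
next
  case False
  assume "rr p"
  have "[:1, a:] = Polynomial.smult a [:- (- 1 / a), 1:]" using False by simp
  hence "[:1, a:] * p = Polynomial.smult a ([:- (- 1 / a), 1:] * p)" by (simp only: mult_smult_left)
  thus ?thesis using rr_smult rr_lin \<open>rr p\<close> by metis
qed

lemma coeff_ineq_prod:
  "2 * coeff (\<Prod>r\<leftarrow>rs. [:-r,1:]) 0 * coeff (\<Prod>r\<leftarrow>rs. [:-r,1:]) 2
     \<le> (coeff (\<Prod>r\<leftarrow>rs. [:-r,1:] :: real poly) 1)^2"
proof (induction rs)
  case Nil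
  then show ?case by simp
next
  case (Cons r rs)
  define q where "q = (\<Prod>r\<leftarrow>rs. [:-r,1:] :: real poly)"
  have e: "(\<Prod>r\<leftarrow>r#rs. [:-r,1:]) = [:-r,1:] * q" unfolding q_def by simp
  have c0: "coeff ([:-r,1:] * q) 0 = - r * coeff q 0" by simp
  have c1: "coeff ([:-r,1:] * q) 1 = coeff q 0 - r * coeff q 1"
    by (simp add: coeff_mult numeral_2_eq_2)
  have c2: "coeff ([:-r,1:] * q) 2 = coeff q 1 - r * coeff q 2"
    by (simp add: coeff_mult numeral_2_eq_2)
  have IH: "2 * coeff q 0 * coeff q 2 \<le> (coeff q 1)^2" using Cons unfolding q_def .
  have "(coeff q 0 - r * coeff q 1)^2 - 2 * (- r * coeff q 0) * (coeff q 1 - r * coeff q 2)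
     = (coeff q 0)^2 + r^2 * ((coeff q 1)^2 - 2 * coeff q 0 * coeff q 2)"
    by (simp add: power2_eq_square algebra_simps)
  moreover have "0 \<le> r^2 * ((coeff q 1)^2 - 2 * coeff q 0 * coeff q 2)" using IH by simp
  ultimately show ?case unfolding e c0 c1 c2
    by (smt (verit) zero_le_power2)
qed

lemma rr_coeff_ineq: "rr p \<Longrightarrow> 2 * coeff p 0 * coeff p 2 \<le> (coeff p 1)^2"
proof -
  assume "rr p"
  then obtain c rs where p: "p = Polynomial.smult c (\<Prod>r\<leftarrow>rs. [:-r,1:])" unfolding rr_def by auto
  have "2 * coeff p 0 * coeff p 2 = c^2 * (2 * coeff (\<Prod>r\<leftarrow>rs. [:-r,1:]) 0 * coeff (\<Prod>r\<leftarrow>rs. [:-r,1:]) 2)"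
    unfolding p by (simp add: power2_eq_square)
  also have "\<dots> \<le> c^2 * (coeff (\<Prod>r\<leftarrow>rs. [:-r,1:] :: real poly) 1)^2"
    by (rule mult_left_mono[OF coeff_ineq_prod], simp)
  also have "\<dots> = (coeff p 1)^2" unfolding p by (simp add: power_mult_distrib)
  finally show ?thesis .
qed

lemma split_lemma:
  fixes q :: "real poly"
  assumes "q \<noteq> 0" "finite S" "degree q \<le> (\<Sum>a\<in>S. Polynomial.order a q)"
  shows "rr q"
  using assms
proof (induction "degree q" arbitrary: q)
  case 0
  then have "q = [:coeff q 0:]" by (metis degree_0_id)
  hence "q = Polynomial.smult (coeff q 0) (\<Prod>r\<leftarrow>[]. [:-r,1:])" by simp
  thus ?case unfolding rr_def by blast
next
  case (Suc d q)
  have "(\<Sum>a\<in>S. Polynomial.order a q) > 0" using Suc by linarith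
  then obtain a where aS: "a \<in> S" and oa: "Polynomial.order a q \<noteq> 0"
    by (metis (mono_tags, lifting) less_numeral_extra(3) sum.neutral)
  hence "poly q a = 0" using order_root by blast
  hence "[:-a,1:] dvd q" using poly_eq_0_iff_dvd by blast
  then obtain r where qr: "q = [:-a,1:] * r" by (elim dvdE)
  have r0: "r \<noteq> 0" using Suc.prems qr by auto
  have "degree q = degree [:-a,1:] + degree r" unfolding qr by (rule degree_mult_eq, auto simp: r0)
  hence degr: "degree r = d" using Suc.hyps by simp
  have ord: "Polynomial.order x q = Polynomial.order x [:-a,1:] + Polynomial.order x r" for x
    using qr Suc.prems order_mult by metis
  have "(\<Sum>x\<in>S. Polynomial.order x q) = (\<Sum>x\<in>S. Polynomial.order x [:-a,1:]) + (\<Sum>x\<in>S. Polynomial.order x r)"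
    unfolding ord sum.distrib ..
  also have "(\<Sum>x\<in>S. Polynomial.order x [:-a,1:]) = (\<Sum>x\<in>S. if x = a then 1 else 0)"
    by (rule sum.cong, auto simp: order_linear')
  also have "\<dots> = 1" using aS Suc.prems by simp
  finally have "degree r \<le> (\<Sum>x\<in>S. Polynomial.order x r)" using Suc degr by linarith
  from Suc.hyps(1)[OF degr[symmetric] r0 Suc.prems(2) this]
  obtain c rs where "r = Polynomial.smult c (\<Prod>r\<leftarrow>rs. [:-r,1:])" unfolding rr_def by auto
  hence "q = Polynomial.smult c (\<Prod>r\<leftarrow>a#rs. [:-r,1:])" using qr by (simp add: mult_smult_right)
  thus ?case unfolding rr_def by blast
qed

lemma poly_pderiv_root_between:
  fixes p :: "real poly"
  assumes "a < b" "poly p a = 0" "poly p b = 0"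
  shows "\<exists>z. a < z \<and> z < b \<and> poly (pderiv p) z = 0"
proof -
  have "\<exists>z>a. z < b \<and> (poly p has_real_derivative 0) (at z)"
    by (rule Rolle[OF assms(1)], use assms in simp,
        intro continuous_on_poly continuous_on_id,
        meson poly_DERIV real_differentiable_def)
  then obtain z where z: "a < z" "z < b" "(poly p has_real_derivative 0) (at z)" by auto
  have "poly (pderiv p) z = 0" using DERIV_unique[OF poly_DERIV z(3)] .
  thus ?thesis using z by auto
qed

lemma rolle_set:
  fixes p :: "real poly"
  assumes "finite R"
  shows "R \<noteq> {} \<longrightarrow> (\<forall>x\<in>R. poly p x = 0) \<longrightarrow> (\<exists>Y. finite Y \<and> card Y + 1 = card R \<and> Y \<inter> R = {}
     \<and> (\<forall>y\<in>Y. y < Max R) \<and> (\<forall>y\<in>Y. poly (pderiv p) y = 0))" (is "?P R")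
  using assms
proof (induct R rule: finite_ranking_induct[where f = "\<lambda>x. x"])
  show "?P {}" by simp
next
  fix x and S :: "real set"
  assume fin: "finite S" and le: "\<And>y. y \<in> S \<Longrightarrow> y \<le> x" and IH: "?P S"
  note facts = fin le IH
  show "?P (insert x S)"
  proof (intro impI)
    assume ne: "insert x S \<noteq> {}" and roots: "\<forall>y\<in>insert x S. poly p y = 0"
    show "\<exists>Y. finite Y \<and> card Y + 1 = card (insert x S) \<and> Y \<inter> insert x S = {} \<and>
         (\<forall>y\<in>Y. y < Max (insert x S)) \<and> (\<forall>y\<in>Y. poly (pderiv p) y = 0)"
    proof (cases "S = {}")
      case True
      then show ?thesis by (intro exI[of _ "{}"], auto)
    next
      case Sne: False
      show ?thesis
      proof (cases "x \<in> S")
        case True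
        then have "insert x S = S" by auto
        from this IH roots Sne show ?thesis by simp
      next
        case xS: False
        from IH Sne roots obtain Y where Y: "finite Y" "card Y + 1 = card S" "Y \<inter> S = {}"
          "\<forall>y\<in>Y. y < Max S" "\<forall>y\<in>Y. poly (pderiv p) y = 0" by auto
        define m where "m = Max S"
        have mS: "m \<in> S" unfolding m_def using Max_in[OF fin Sne] .
        have "m \<noteq> x" using xS mS by blast
        hence mx: "m < x" using le[OF mS] by simp
        have Smax: "y \<in> S \<Longrightarrow> y \<le> m" for y unfolding m_def using Max_ge[OF fin] by auto
        obtain z where z: "m < z" "z < x" "poly (pderiv p) z = 0"
          using poly_pderiv_root_between[OF mx] roots mS by auto
        have Maxi: "Max (insert x S) = x"
          using fin le by (intro Max_eqI, auto)
        have zY: "z \<notin> Y" using Y(4) z(1) unfolding m_def[symmetric] by force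
        have xY: "x \<notin> Y" using Y(4) mx unfolding m_def[symmetric] by force
        have zS: "z \<notin> S" using Smax z(1) by force
        have zx: "z \<noteq> x" using z(2) by simp
        show ?thesis
        proof (intro exI[of _ "insert z Y"] conjI)
          show "finite (insert z Y)" using Y by auto
          show "card (insert z Y) + 1 = card (insert x S)" using Y zY xS fin by simp
          show "insert z Y \<inter> insert x S = {}"
            using Y(3) zY xY zS zx by blast
          show "\<forall>y\<in>insert z Y. y < Max (insert x S)"
            unfolding Maxi using Y(4) z mx unfolding m_def[symmetric] by force
          show "\<forall>y\<in>insert z Y. poly (pderiv p) y = 0" using Y z by auto
        qed
      qed
    qed
  qed
qed

lemma prod_lin_nz: "(\<Prod>r\<leftarrow>rs. [:-r,1:] :: real poly) \<noteq> 0"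
  unfolding prod_list_zero_iff by auto

lemma order_prod_lin: "Polynomial.order x (\<Prod>r\<leftarrow>rs. [:-r,1:] :: real poly) = count_list rs x"
proof (induction rs)
  case Nil
  then show ?case by (simp add: order_1)
next
  case (Cons r rs)
  have nz: "[:-r,1:] * (\<Prod>r\<leftarrow>rs. [:-r,1:] :: real poly) \<noteq> 0"
    using prod_lin_nz[of "r#rs"] by simp
  have "Polynomial.order x (\<Prod>r\<leftarrow>r#rs. [:-r,1:] :: real poly) = Polynomial.order x [:-r,1:] + Polynomial.order x (\<Prod>r\<leftarrow>rs. [:-r,1:] :: real poly)"
    using order_mult[OF nz] by simp
  also have "Polynomial.order x [:-r,1:] = (if x = r then 1 else 0)" by (simp add: order_linear')
  finally show ?case using Cons.IH by simp
qed

lemma rr_pderiv: assumes "rr p" shows "rr (pderiv p)"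
proof -
  from assms obtain c rs where p: "p = Polynomial.smult c (\<Prod>r\<leftarrow>rs. [:-r,1:])" unfolding rr_def by auto
  show ?thesis
  proof (cases "c = 0 \<or> rs = []")
    case True
    then have "pderiv p = 0" unfolding p by auto
    then show ?thesis using rr_0 by simp
  next
    case False
    define P where "P = (\<Prod>r\<leftarrow>rs. [:-r,1:] :: real poly)"
    have degP: "degree P = length rs" unfolding P_def by (rule degree_linear_factors)
    have P0: "P \<noteq> 0" unfolding P_def by (rule prod_lin_nz)
    have p0: "p \<noteq> 0" using P0 False unfolding p P_def by auto
    have degp: "degree p = length rs" using False degP unfolding p P_def by simp
    have ordp: "Polynomial.order x p = count_list rs x" for x
      unfolding p using False order_smult order_prod_lin by metis
    have roots: "poly p x = 0 \<longleftrightarrow> x \<in> set rs" for x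
      using order_root[of p x] p0 ordp by (simp add: count_list_0_iff)
    have dp0: "pderiv p \<noteq> 0" using degp False pderiv_eq_0_iff[of p] by force
    define R where "R = set rs"
    have Rne: "R \<noteq> {}" using False R_def by auto
    obtain Y where Y: "finite Y" "card Y + 1 = card R" "Y \<inter> R = {}" "\<forall>y\<in>Y. poly (pderiv p) y = 0"
      using rolle_set[of R p] Rne roots unfolding R_def by auto
    have sR: "(\<Sum>x\<in>R. Polynomial.order x p) = length rs"
      unfolding ordp R_def by (rule sum_count_set, auto)
    have oR: "Polynomial.order x p = Suc (Polynomial.order x (pderiv p))" if "x \<in> R" for x
      using order_pderiv[OF p0] roots that R_def by auto
    have "(\<Sum>x\<in>R. Polynomial.order x p) = (\<Sum>x\<in>R. Suc (Polynomial.order x (pderiv p)))"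
      by (rule sum.cong) (auto simp: oR)
    also have "\<dots> = (\<Sum>x\<in>R. Polynomial.order x (pderiv p)) + card R" by (rule sum_Suc)
    finally have "(\<Sum>x\<in>R. Polynomial.order x p) = (\<Sum>x\<in>R. Polynomial.order x (pderiv p)) + card R" .
    hence sR': "(\<Sum>x\<in>R. Polynomial.order x (pderiv p)) + card R = length rs" using sR by simp
    have o1: "1 \<le> Polynomial.order x (pderiv p)" if "x \<in> Y" for x
    proof -
      have "poly (pderiv p) x = 0" using Y(4) that by blast
      hence "Polynomial.order x (pderiv p) \<noteq> 0" using order_root[of "pderiv p" x] dp0 by blast
      thus ?thesis by simp
    qed
    have sY: "card Y \<le> (\<Sum>x\<in>Y. Polynomial.order x (pderiv p))"
    proof -
      have "card Y = (\<Sum>x\<in>Y. 1)" by simp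
      also have "\<dots> \<le> (\<Sum>x\<in>Y. Polynomial.order x (pderiv p))"
        by (rule sum_mono, rule o1)
      finally show ?thesis .
    qed
    have "degree (pderiv p) \<le> (\<Sum>x\<in>R \<union> Y. Polynomial.order x (pderiv p))"
    proof -
      have "(\<Sum>x\<in>R \<union> Y. Polynomial.order x (pderiv p)) = (\<Sum>x\<in>R. Polynomial.order x (pderiv p)) + (\<Sum>x\<in>Y. Polynomial.order x (pderiv p))"
        by (rule sum.union_disjoint, auto simp: R_def Y(1)) (use Y(3) R_def in auto)
      thus ?thesis using sR' sY Y(2) degp degree_pderiv[of p] by linarith
    qed
    thus ?thesis using split_lemma[OF dp0] Y(1) R_def by auto
  qed
qed

lemma rr_higher_pderiv: "rr p \<Longrightarrow> rr ((pderiv ^^ k) p)"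
  by (induction k) (auto intro: rr_pderiv)

lemma coeff_higher_pderiv:
  "coeff ((pderiv ^^ k) p) i * fact i = fact (i + k) * coeff p (i + k :: nat)" for p :: "real poly"
proof (induction k arbitrary: i)
  case 0
  then show ?case by simp
next
  case (Suc k)
  have "coeff ((pderiv ^^ Suc k) p) i * fact i = of_nat (Suc i) * coeff ((pderiv ^^ k) p) (Suc i) * fact i"
    by (simp add: coeff_pderiv)
  also have "\<dots> = coeff ((pderiv ^^ k) p) (Suc i) * fact (Suc i)" by (simp add: algebra_simps)
  also have "\<dots> = fact (Suc i + k) * coeff p (Suc i + k)" by (rule Suc)
  finally show ?case by simp
qed

lemma newton_rr:
  assumes "rr p"
  shows "coeff p k * coeff p (k+2) \<le> (coeff p (k+1))^2"
proof -
  define q where "q = (pderiv ^^ k) p"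
  have "rr q" unfolding q_def by (rule rr_higher_pderiv[OF assms])
  hence ineq: "2 * coeff q 0 * coeff q 2 \<le> (coeff q 1)^2" by (rule rr_coeff_ineq)
  have q0: "coeff q 0 = fact k * coeff p k" using coeff_higher_pderiv[of k p 0] unfolding q_def by simp
  have q1: "coeff q 1 = fact (k+1) * coeff p (k+1)" using coeff_higher_pderiv[of k p 1] unfolding q_def by (simp add: add.commute)
  have q2: "2 * coeff q 2 = fact (k+2) * coeff p (k+2)" using coeff_higher_pderiv[of k p 2] unfolding q_def
    by (simp add: add.commute mult.commute)
  have fk: "(fact (k+1) :: real) = (real k + 1) * fact k" by (simp add: algebra_simps)
  have fk2: "(fact (k+2) :: real) = (real k + 2) * (real k + 1) * fact k"
    by (simp add: numeral_2_eq_2 algebra_simps)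
  define F where "F = (fact k :: real)"
  define X where "X = coeff p k * coeff p (k+2)"
  define Y where "Y = (coeff p (k+1))^2"
  have F0: "F > 0" unfolding F_def by simp
  have "fact k * coeff p k * (fact (k+2) * coeff p (k+2)) \<le> (fact (k+1) * coeff p (k+1))^2"
    using ineq unfolding q0 q1 q2[symmetric] by (simp add: mult.assoc)
  hence ineq2: "F * coeff p k * ((real k+2) * (real k+1) * F * coeff p (k+2)) \<le> ((real k+1) * F * coeff p (k+1))^2"
    unfolding fk fk2 F_def .
  have eq1: "F * coeff p k * ((real k+2) * (real k+1) * F * coeff p (k+2)) = (F^2 * (real k+1)) * ((real k+2) * X)"
    unfolding X_def by (simp add: power2_eq_square mult_ac)
  have eq2: "((real k+1) * F * coeff p (k+1))^2 = (F^2 * (real k+1)) * ((real k+1) * Y)"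
    unfolding Y_def by (simp add: power2_eq_square mult_ac)
  have "(F^2 * (real k+1)) * ((real k+2) * X) \<le> (F^2 * (real k+1)) * ((real k+1) * Y)"
    using ineq2 unfolding eq1 eq2 .
  moreover have "F^2 * (real k+1) > 0" using F0 by simp
  ultimately have main: "(real k+2) * X \<le> (real k+1) * Y" by (simp add: mult_le_cancel_left_pos)
  have Y0: "Y \<ge> 0" unfolding Y_def by simp
  show ?thesis
  proof (cases "X \<le> 0")
    case True
    then show ?thesis using Y0 unfolding X_def Y_def by linarith
  next
    case False
    hence "(real k+1) * X \<le> (real k+2) * X" by (simp add: mult_right_mono)
    hence "(real k+1) * X \<le> (real k+1) * Y" using main by linarith
    hence "X \<le> Y" by (simp add: mult_le_cancel_left_pos)
    thus ?thesis unfolding X_def Y_def .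
  qed
qed

definition Qp :: "(nat \<Rightarrow> real) \<Rightarrow> nat set \<Rightarrow> real poly" where
  "Qp f A = (\<Prod>i\<in>A. [:1, f i:])"

definition es :: "(nat \<Rightarrow> real) \<Rightarrow> nat set \<Rightarrow> nat \<Rightarrow> real" where
  "es f A j = coeff (Qp f A) j"

lemma coeff_lin1_0: "coeff ([:1, a:] * q) 0 = coeff q 0" for q :: "real poly"
  by simp

lemma coeff_lin1_Suc: "coeff ([:1, a:] * q) (Suc j) = coeff q (Suc j) + a * coeff q j" for q :: "real poly"
  by (simp add: coeff_mult)

lemma Qp_insert: "finite A \<Longrightarrow> x \<notin> A \<Longrightarrow> Qp f (insert x A) = [:1, f x:] * Qp f A"
  unfolding Qp_def by simp

lemma Qp_remove: "finite A \<Longrightarrow> x \<in> A \<Longrightarrow> Qp f A = [:1, f x:] * Qp f (A - {x})"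
  unfolding Qp_def by (rule prod.remove)

lemma rr_Qp: "finite A \<Longrightarrow> rr (Qp f A)"
proof (induction A rule: finite_induct)
  case empty
  show ?case unfolding Qp_def rr_def by (rule exI[of _ 1], rule exI[of _ "[]"], simp)
next
  case (insert x F)
  then show ?case using rr_mult_one_lin Qp_insert by metis
qed

lemma newton_es: "finite A \<Longrightarrow> es f A j * es f A (j+2) \<le> (es f A (j+1))^2"
  unfolding es_def using newton_rr[OF rr_Qp] by blast

lemma es_0: "finite A \<Longrightarrow> es f A 0 = 1"
proof (induction A rule: finite_induct)
  case empty
  then show ?case unfolding es_def Qp_def by simp
next
  case (insert x F)
  then show ?case unfolding es_def Qp_insert[OF insert(1,2)] coeff_lin1_0 by simp
qed

lemma es_rec: "finite A \<Longrightarrow> l \<in> A \<Longrightarrow> es f A (Suc j) = es f (A - {l}) (Suc j) + f l * es f (A - {l}) j"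
  unfolding es_def Qp_remove[of A l] coeff_lin1_Suc by simp

lemma es_scale: "finite A \<Longrightarrow> es (\<lambda>i. s * f i) A j = s^j * es f A j"
proof (induction A arbitrary: j rule: finite_induct)
  case empty
  then show ?case unfolding es_def Qp_def by (cases j, auto)
next
  case (insert x F)
  show ?case
  proof (cases j)
    case 0
    then show ?thesis using es_0 insert(1) by simp
  next
    case (Suc j')
    have "es (\<lambda>i. s * f i) (insert x F) j = es (\<lambda>i. s * f i) F (Suc j') + s * f x * es (\<lambda>i. s * f i) F j'"
      unfolding Suc es_def Qp_insert[OF insert(1,2)] coeff_lin1_Suc by simp
    also have "\<dots> = s^Suc j' * es f F (Suc j') + s * f x * (s^j' * es f F j')"
      using insert.IH by simp
    also have "\<dots> = s^j * (es f F (Suc j') + f x * es f F j')" unfolding Suc by (simp add: algebra_simps)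
    also have "es f F (Suc j') + f x * es f F j' = es f (insert x F) j"
      unfolding Suc es_def Qp_insert[OF insert(1,2)] coeff_lin1_Suc by simp
    finally show ?thesis .
  qed
qed

lemma degree_Qp: "finite A \<Longrightarrow> degree (Qp f A) \<le> card A"
proof (induction A rule: finite_induct)
  case empty
  then show ?case unfolding Qp_def by simp
next
  case (insert x F)
  have "degree (Qp f (insert x F)) \<le> degree [:1, f x:] + degree (Qp f F)"
    unfolding Qp_insert[OF insert(1,2)] by (rule degree_mult_le)
  also have "\<dots> \<le> 1 + card F" using insert by simp
  finally show ?case using insert by simp
qed

lemma es_big: "finite A \<Longrightarrow> card A < j \<Longrightarrow> es f A j = 0"
  unfolding es_def using degree_Qp by (metis coeff_eq_0 le_less_trans)

definition Pp :: "(nat \<Rightarrow> real) \<Rightarrow> nat set \<Rightarrow> real poly" where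
  "Pp f A = (\<Prod>i\<in>A. [:- f i, 1:])"

lemma degree_Pp: "finite A \<Longrightarrow> degree (Pp f A) = card A"
  unfolding Pp_def by (subst degree_prod_sum_eq, auto)

lemma coeff_Pp_top: "finite A \<Longrightarrow> coeff (Pp f A) (card A) = 1"
proof -
  assume A: "finite A"
  have "0 \<notin> (degree \<circ> (\<lambda>i. [:- f i, 1:])) ` A" by auto
  from degree_prod_sum_monic[OF A this] show ?thesis unfolding Pp_def by (simp add: o_def)
qed

lemma Pp_insert: "finite A \<Longrightarrow> x \<notin> A \<Longrightarrow> Pp f (insert x A) = [:- f x, 1:] * Pp f A"
  unfolding Pp_def by simp

lemma coeff_linm: "coeff ([:- a, 1:] * q) (Suc i) = coeff q i - a * coeff q (Suc i)" for q :: "real poly"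
  by (simp add: coeff_mult)

lemma coeff_linm0: "coeff ([:- a, 1:] * q) 0 = - a * coeff q 0" for q :: "real poly"
  by simp

lemma Pp_es: "finite A \<Longrightarrow> j \<le> card A \<Longrightarrow> (-1)^j * coeff (Pp f A) (card A - j) = es f A j"
proof (induction A arbitrary: j rule: finite_induct)
  case empty
  then show ?case unfolding es_def Qp_def Pp_def by simp
next
  case (insert x F)
  define m where "m = card F"
  have cardI: "card (insert x F) = Suc m" using insert m_def by simp
  note PI = Pp_insert[OF insert(1,2)]
  note QI = Qp_insert[OF insert(1,2)]
  show ?case
  proof (cases j)
    case 0
    then show ?thesis using coeff_Pp_top es_0 insert(1) by simp
  next
    case (Suc j')
    have j'm: "j' \<le> m" using insert(4) Suc cardI by simp
    have esI: "es f (insert x F) j = es f F (Suc j') + f x * es f F j'"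
      unfolding Suc es_def QI coeff_lin1_Suc by simp
    have IH': "(-1)^j' * coeff (Pp f F) (m - j') = es f F j'" using insert.IH[of j'] j'm m_def by simp
    show ?thesis
    proof (cases "j' = m")
      case True
      have "(-1)^j * coeff (Pp f (insert x F)) (card (insert x F) - j) = (-1)^(Suc m) * (- f x * coeff (Pp f F) 0)"
        unfolding PI cardI Suc True by (simp add: coeff_linm0)
      also have "\<dots> = f x * ((-1)^m * coeff (Pp f F) (m - m))" by simp
      also have "\<dots> = f x * es f F j'" using IH' True by simp
      also have "\<dots> = es f (insert x F) j" unfolding esI using es_big[OF insert(1), of "Suc j'"] True m_def by simp
      finally show ?thesis .
    next
      case False
      hence j'm2: "Suc j' \<le> m" using j'm by simp
      have IH2: "(-1)^(Suc j') * coeff (Pp f F) (m - Suc j') = es f F (Suc j')"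
        using insert.IH[of "Suc j'"] j'm2 m_def by simp
      have eqi: "card (insert x F) - Suc j' = Suc (m - Suc j')" using cardI j'm2 by simp
      have eqi2: "Suc (m - Suc j') = m - j'" using j'm2 by simp
      have "(-1)^j * coeff (Pp f (insert x F)) (card (insert x F) - j)
          = (-1)^(Suc j') * (coeff (Pp f F) (m - Suc j') - f x * coeff (Pp f F) (m - j'))"
        unfolding Suc PI eqi by (subst coeff_linm) (simp only: eqi2)
      also have "\<dots> = (-1)^(Suc j') * coeff (Pp f F) (m - Suc j') + f x * ((-1)^j' * coeff (Pp f F) (m - j'))"
        by (simp add: algebra_simps)
      also have "\<dots> = es f (insert x F) j" unfolding esI IH2 IH' ..
      finally show ?thesis .
    qed
  qed
qed

definition diagm :: "nat \<Rightarrow> (nat \<Rightarrow> real) \<Rightarrow> real mat" where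
  "diagm n g = mat n n (\<lambda>(i,j). if i = j then g i else 0)"

lemma diagm_carrier[simp]: "diagm n g \<in> carrier_mat n n"
  unfolding diagm_def by simp

lemma diagm_dims[simp]: "dim_row (diagm n g) = n" "dim_col (diagm n g) = n"
  unfolding diagm_def by auto

lemma det_diagm: "det (diagm n g) = (\<Prod>i<n. g i)"
proof -
  have ut: "upper_triangular (diagm n g)" unfolding diagm_def upper_triangular_def by auto
  have "det (diagm n g) = prod_list (diag_mat (diagm n g))"
    by (rule det_upper_triangular[OF ut diagm_carrier])
  also have "diag_mat (diagm n g) = map g [0..<n]" unfolding diag_mat_def diagm_def by auto
  also have "prod_list (map g [0..<n]) = prod g (set [0..<n])"
    by (rule prod.distinct_set_conv_list[symmetric], simp)
  also have "set [0..<n] = {..<n}" by auto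
  finally show ?thesis .
qed

lemma det_I_rank1:
  fixes x y :: "real vec"
  assumes x: "x \<in> carrier_vec n" and y: "y \<in> carrier_vec n"
  shows "det (1\<^sub>m n + mat n n (\<lambda>(i,j). x$i * y$j)) = 1 + y \<bullet> x"
proof (cases "n = 0")
  case True
  then show ?thesis using x y by (simp add: scalar_prod_def)
next
  case False
  define Bm where "Bm = mat n n (\<lambda>(i,j). if j = 0 then - x$i else 0 :: real)"
  define Cm where "Cm = mat n n (\<lambda>(i,j). if i = 0 then y$j else 0 :: real)"
  have B: "Bm \<in> carrier_mat n n" and C: "Cm \<in> carrier_mat n n" unfolding Bm_def Cm_def by auto
  have BC: "Bm * Cm = mat n n (\<lambda>(i,j). - x$i * y$j)"
  proof (rule eq_matI)
    fix i j assume ij: "i < dim_row (mat n n (\<lambda>(i,j). - x$i * y$j))" "j < dim_col (mat n n (\<lambda>(i,j). - x$i * y$j))"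
    hence i: "i < n" and j: "j < n" by auto
    have "(Bm * Cm) $$ (i,j) = (\<Sum>k<n. Bm $$ (i,k) * Cm $$ (k,j))"
      using i j B C by (simp add: scalar_prod_def atLeast0LessThan)
    also have "\<dots> = (\<Sum>k<n. if k = 0 then - x$i * y$j else 0)"
      by (rule sum.cong, auto simp: Bm_def Cm_def i j)
    also have "\<dots> = - x$i * y$j" using False by simp
    finally show "(Bm * Cm) $$ (i,j) = mat n n (\<lambda>(i,j). - x$i * y$j) $$ (i,j)" using i j by simp
  qed (use B C in auto)
  have CB: "Cm * Bm = mat n n (\<lambda>(i,j). if i = 0 \<and> j = 0 then - (y \<bullet> x) else 0)"
  proof (rule eq_matI)
    fix i j assume ij: "i < dim_row (mat n n (\<lambda>(i,j). if i = 0 \<and> j = 0 then - (y \<bullet> x) else 0 :: real))"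
       "j < dim_col (mat n n (\<lambda>(i,j). if i = 0 \<and> j = 0 then - (y \<bullet> x) else 0 :: real))"
    hence i: "i < n" and j: "j < n" by auto
    have "(Cm * Bm) $$ (i,j) = (\<Sum>k<n. Cm $$ (i,k) * Bm $$ (k,j))"
      using i j B C by (simp add: scalar_prod_def atLeast0LessThan)
    also have "\<dots> = (\<Sum>k<n. if i = 0 \<and> j = 0 then - (y$k * x$k) else 0)"
      by (rule sum.cong, auto simp: Bm_def Cm_def i j)
    also have "\<dots> = (if i = 0 \<and> j = 0 then - (y \<bullet> x) else 0)"
      using x y by (auto simp: scalar_prod_def atLeast0LessThan sum_negf)
    finally show "(Cm * Bm) $$ (i,j) = mat n n (\<lambda>(i,j). if i = 0 \<and> j = 0 then - (y \<bullet> x) else 0) $$ (i,j)"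
      using i j by simp
  qed (use B C in auto)
  define B1 where "B1 = four_block_mat (1\<^sub>m n) Bm Cm (1\<^sub>m n)"
  have "det B1 = det (1\<^sub>m n * 1\<^sub>m n - Bm * Cm)"
    unfolding B1_def by (rule det_four_block_mat[OF one_carrier_mat B C one_carrier_mat], use C in simp)
  also have "1\<^sub>m n * 1\<^sub>m n - Bm * Cm = 1\<^sub>m n + mat n n (\<lambda>(i,j). x$i * y$j)"
    unfolding BC by (rule eq_matI, auto)
  finally have d1: "det B1 = det (1\<^sub>m n + mat n n (\<lambda>(i,j). x$i * y$j))" .
  define L where "L = four_block_mat (1\<^sub>m n) (0\<^sub>m n n) Cm (1\<^sub>m n)"
  define R where "R = four_block_mat (1\<^sub>m n) Bm (0\<^sub>m n n) (1\<^sub>m n - Cm * Bm)"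
  have CBc: "Cm * Bm \<in> carrier_mat n n" using B C by simp
  have "L * R = four_block_mat (1\<^sub>m n * 1\<^sub>m n + 0\<^sub>m n n * 0\<^sub>m n n) (1\<^sub>m n * Bm + 0\<^sub>m n n * (1\<^sub>m n - Cm * Bm))
      (Cm * 1\<^sub>m n + 1\<^sub>m n * 0\<^sub>m n n) (Cm * Bm + 1\<^sub>m n * (1\<^sub>m n - Cm * Bm))"
    unfolding L_def R_def
    by (rule mult_four_block_mat, insert B C CBc, auto)
  also have "\<dots> = B1" unfolding B1_def
  proof -
    have e1: "1\<^sub>m n * 1\<^sub>m n + 0\<^sub>m n n * 0\<^sub>m n n = (1\<^sub>m n :: real mat)" by simp
    have oc: "1\<^sub>m n - Cm * Bm \<in> carrier_mat n n" by (rule minus_carrier_mat[OF CBc])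
    have "0\<^sub>m n n * (1\<^sub>m n - Cm * Bm) = 0\<^sub>m n n" by (rule left_mult_zero_mat[OF oc])
    hence e2: "1\<^sub>m n * Bm + 0\<^sub>m n n * (1\<^sub>m n - Cm * Bm) = Bm" using B by simp
    have e3: "Cm * 1\<^sub>m n + 1\<^sub>m n * 0\<^sub>m n n = Cm" using C by simp
    have o1: "1\<^sub>m n * (1\<^sub>m n - Cm * Bm) = 1\<^sub>m n - Cm * Bm" by (rule left_mult_one_mat[OF oc])
    have dC: "dim_row Cm = n" "dim_col Bm = n" unfolding Cm_def Bm_def by auto
    have "Cm * Bm + (1\<^sub>m n - Cm * Bm) = 1\<^sub>m n"
      by (intro eq_matI, auto simp: dC)
    hence e4: "Cm * Bm + 1\<^sub>m n * (1\<^sub>m n - Cm * Bm) = 1\<^sub>m n" unfolding o1 .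
    show "four_block_mat (1\<^sub>m n * 1\<^sub>m n + 0\<^sub>m n n * 0\<^sub>m n n) (1\<^sub>m n * Bm + 0\<^sub>m n n * (1\<^sub>m n - Cm * Bm))
      (Cm * 1\<^sub>m n + 1\<^sub>m n * 0\<^sub>m n n) (Cm * Bm + 1\<^sub>m n * (1\<^sub>m n - Cm * Bm)) = four_block_mat (1\<^sub>m n) Bm Cm (1\<^sub>m n)"
      unfolding e1 e2 e3 e4 ..
  qed
  finally have LR: "L * R = B1" .
  have Lc: "L \<in> carrier_mat (n+n) (n+n)" and Rc: "R \<in> carrier_mat (n+n) (n+n)"
    unfolding L_def R_def using B C CBc by auto
  have dL: "det L = det (1\<^sub>m n) * det (1\<^sub>m n :: real mat)" unfolding L_def
    by (rule det_four_block_mat_upper_right_zero[OF one_carrier_mat refl C one_carrier_mat])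
  hence dL: "det L = 1" by simp
  have oc: "1\<^sub>m n - Cm * Bm \<in> carrier_mat n n" by (rule minus_carrier_mat[OF CBc])
  have dR: "det R = det (1\<^sub>m n) * det (1\<^sub>m n - Cm * Bm)" unfolding R_def
    by (rule det_four_block_mat_lower_left_zero[OF one_carrier_mat B refl oc])
  hence dR: "det R = det (1\<^sub>m n - Cm * Bm)" by simp
  have "1\<^sub>m n - Cm * Bm = diagm n (\<lambda>i. if i = 0 then 1 + y \<bullet> x else 1)"
    unfolding CB diagm_def by (rule eq_matI, auto)
  hence "det (1\<^sub>m n - Cm * Bm) = (\<Prod>i<n. if i = 0 then 1 + y \<bullet> x else 1)" by (simp add: det_diagm)
  also have "\<dots> = 1 + y \<bullet> x" using False by (subst prod.delta, auto)
  finally have dR': "det R = 1 + y \<bullet> x" using dR by simp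
  have "det B1 = det L * det R" unfolding LR[symmetric] by (rule det_mult[OF Lc Rc])
  thus ?thesis using d1 dL dR' by simp
qed


lemma det_diag_rank1:
  fixes y :: "real vec" and m :: "nat \<Rightarrow> real"
  assumes y: "y \<in> carrier_vec n" and nz: "\<And>i. i < n \<Longrightarrow> m i \<noteq> 0"
  shows "det (diagm n m + mat n n (\<lambda>(i,j). y$i * y$j)) = (\<Prod>i<n. m i) * (1 + (\<Sum>l<n. (y$l)^2 / m l))"
proof -
  define x where "x = vec n (\<lambda>i. y$i / m i)"
  have x: "x \<in> carrier_vec n" unfolding x_def by simp
  define N where "N = 1\<^sub>m n + mat n n (\<lambda>(i,j). x$i * y$j)"
  have Nc: "N \<in> carrier_mat n n" unfolding N_def by simp
  have eq: "diagm n m + mat n n (\<lambda>(i,j). y$i * y$j) = diagm n m * N"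
  proof (rule eq_matI)
    fix i j assume "i < dim_row (diagm n m * N)" "j < dim_col (diagm n m * N)"
    hence i: "i < n" and j: "j < n" using Nc by auto
    have "(diagm n m * N) $$ (i,j) = (\<Sum>k<n. diagm n m $$ (i,k) * N $$ (k,j))"
      using i j Nc by (simp add: scalar_prod_def atLeast0LessThan)
    also have "\<dots> = (\<Sum>k<n. if k = i then m i * N $$ (i,j) else 0)"
      by (rule sum.cong, auto simp: diagm_def i)
    also have "\<dots> = m i * N $$ (i,j)" using i by simp
    also have "\<dots> = (if i = j then m i else 0) + y$i * y$j"
      unfolding N_def x_def using i j nz[OF i] by (auto simp: field_simps)
    finally show "(diagm n m + mat n n (\<lambda>(i,j). y$i * y$j)) $$ (i,j) = (diagm n m * N) $$ (i,j)"
      using i j by (simp add: diagm_def)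
  qed (use Nc in auto)
  have "det (diagm n m * N) = det (diagm n m) * det N"
    by (rule det_mult[OF diagm_carrier Nc])
  also have "det N = 1 + y \<bullet> x" unfolding N_def by (rule det_I_rank1[OF x y])
  also have "y \<bullet> x = (\<Sum>l<n. (y$l)^2 / m l)"
    using y unfolding x_def scalar_prod_def by (auto simp: atLeast0LessThan power2_eq_square intro!: sum.cong)
  finally show ?thesis unfolding eq det_diagm .
qed

lemma poly_eq_cofinite:
  fixes p q :: "real poly"
  assumes F: "finite F" and eq: "\<And>t. t \<notin> F \<Longrightarrow> poly p t = poly q t"
  shows "p = q"
proof (rule ccontr)
  assume "p \<noteq> q"
  hence "p - q \<noteq> 0" by simp
  hence fin: "finite {t. poly (p - q) t = 0}" by (rule poly_roots_finite)
  have "UNIV - F \<subseteq> {t. poly (p - q) t = 0}" using eq by auto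
  moreover have "infinite (UNIV - F :: real set)"
    using Diff_infinite_finite[OF F infinite_UNIV_char_0] .
  ultimately show False using fin finite_subset by blast
qed

lemma outer_eq: "y \<in> carrier_vec n \<Longrightarrow> outer y = mat n n (\<lambda>(i,j). y$i * y$j)"
  unfolding outer_def by simp

lemma poly_Pp: "finite A \<Longrightarrow> poly (Pp g A) t = (\<Prod>i\<in>A. t - g i)"
  unfolding Pp_def by (simp add: poly_prod)

lemma char_poly_diag_rank1:
  assumes y: "y \<in> carrier_vec n"
  shows "char_poly (diagm n g - outer y) = Pp g {..<n} + (\<Sum>l<n. Polynomial.smult ((y$l)^2) (Pp g ({..<n} - {l})))"
proof (rule poly_eq_cofinite[of "g ` {..<n}"])
  fix t assume t: "t \<notin> g ` {..<n}"
  have nz: "i < n \<Longrightarrow> t - g i \<noteq> 0" for i using t by auto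
  define E where "E = diagm n g - outer y"
  have Ec: "E \<in> carrier_mat n n" unfolding E_def outer_eq[OF y] by (rule minus_carrier_mat, simp)
  have "poly (char_poly E) t = det (- char_matrix E t)" by (rule char_poly_matrix[OF Ec])
  also have "- char_matrix E t = diagm n (\<lambda>i. t - g i) + mat n n (\<lambda>(i,j). y$i * y$j)"
    unfolding char_matrix_def E_def outer_eq[OF y] diagm_def by (rule eq_matI, auto)
  also have "det \<dots> = (\<Prod>i<n. t - g i) * (1 + (\<Sum>l<n. (y$l)^2 / (t - g l)))"
    by (rule det_diag_rank1[OF y nz])
  also have "\<dots> = (\<Prod>i<n. t - g i) + (\<Sum>l<n. (y$l)^2 * (\<Prod>i\<in>{..<n} - {l}. t - g i))"
  proof -
    have "(\<Prod>i<n. t - g i) * (\<Sum>l<n. (y$l)^2 / (t - g l)) = (\<Sum>l<n. (y$l)^2 * (\<Prod>i\<in>{..<n} - {l}. t - g i))"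
      unfolding sum_distrib_left
    proof (rule sum.cong[OF refl])
      fix l assume l: "l \<in> {..<n}"
      have "(\<Prod>i<n. t - g i) = (t - g l) * (\<Prod>i\<in>{..<n} - {l}. t - g i)"
        by (rule prod.remove, use l in auto)
      thus "(\<Prod>i<n. t - g i) * ((y$l)^2 / (t - g l)) = (y$l)^2 * (\<Prod>i\<in>{..<n} - {l}. t - g i)"
        using nz[of l] l by simp
    qed
    thus ?thesis by (simp add: algebra_simps)
  qed
  also have "\<dots> = poly (Pp g {..<n} + (\<Sum>l<n. Polynomial.smult ((y$l)^2) (Pp g ({..<n} - {l})))) t"
    by (simp add: poly_sum poly_Pp)
  finally show "poly (char_poly (diagm n g - outer y)) t = poly (Pp g {..<n} + (\<Sum>l<n. Polynomial.smult ((y$l)^2) (Pp g ({..<n} - {l})))) t"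
    unfolding E_def .
qed simp

lemma sigma_diag_rank1:
  assumes y: "y \<in> carrier_vec n" and i: "1 \<le> i" "i \<le> n"
  shows "sigma i (diagm n g - outer y) = es g {..<n} i - (\<Sum>l<n. (y$l)^2 * es g ({..<n} - {l}) (i - 1))"
proof -
  have dr: "dim_row (diagm n g - outer y) = n" unfolding outer_eq[OF y] by simp
  have "sigma i (diagm n g - outer y) = (-1)^i * coeff (char_poly (diagm n g - outer y)) (n - i)"
    unfolding sigma_def dr using i by simp
  also have "\<dots> = (-1)^i * coeff (Pp g {..<n}) (n - i) + (\<Sum>l<n. (y$l)^2 * ((-1)^i * coeff (Pp g ({..<n} - {l})) (n - i)))"
    unfolding char_poly_diag_rank1[OF y] coeff_add coeff_sum coeff_smult
    by (simp add: sum_distrib_left algebra_simps)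
  also have "(-1)^i * coeff (Pp g {..<n}) (n - i) = es g {..<n} i"
    using Pp_es[of "{..<n}" i g] i by simp
  also have "(\<Sum>l<n. (y$l)^2 * ((-1)^i * coeff (Pp g ({..<n} - {l})) (n - i)))
      = (\<Sum>l<n. (y$l)^2 * (- es g ({..<n} - {l}) (i - 1)))"
  proof (rule sum.cong[OF refl])
    fix l assume l: "l \<in> {..<n}"
    have c: "card ({..<n} - {l}) = n - 1" using l by simp
    have "(-1)^(i-1) * coeff (Pp g ({..<n} - {l})) (card ({..<n} - {l}) - (i - 1)) = es g ({..<n} - {l}) (i - 1)"
      by (rule Pp_es, use c i in auto)
    moreover have "card ({..<n} - {l}) - (i - 1) = n - i" using c i by simp
    moreover have "(-1::real)^i = - ((-1)^(i-1))" using i by (cases i, auto)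
    ultimately show "(y$l)^2 * ((-1)^i * coeff (Pp g ({..<n} - {l})) (n - i)) = (y$l)^2 * (- es g ({..<n} - {l}) (i - 1))"
      by simp
  qed
  finally show ?thesis by (simp add: sum_negf)
qed

lemma sigma_diag:
  assumes j: "j \<le> n"
  shows "sigma j (diagm n g) = es g {..<n} j"
proof -
  have z: "(0\<^sub>v n :: real vec) \<in> carrier_vec n" by simp
  have "diagm n g - outer (0\<^sub>v n) = diagm n g" unfolding outer_eq[OF z] diagm_def by (rule eq_matI, auto)
  hence cp: "char_poly (diagm n g) = Pp g {..<n}" using char_poly_diag_rank1[OF z, of g] by simp
  have "sigma j (diagm n g) = (-1)^j * coeff (Pp g {..<n}) (n - j)"
    unfolding sigma_def cp using j by (simp add: diagm_def)
  also have "\<dots> = es g {..<n} j" using Pp_es[of "{..<n}" j g] j by simp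
  finally show ?thesis .
qed

lemma real_sym_eigen:
  fixes A :: "real mat"
  assumes A: "A \<in> carrier_mat n n" and sym: "transpose_mat A = A" and n: "n > 0"
  shows "\<exists>e v. v \<in> carrier_vec n \<and> v \<noteq> 0\<^sub>v n \<and> A *\<^sub>v v = e \<cdot>\<^sub>v v"
proof -
  define Ac where "Ac = map_mat complex_of_real A"
  have Ac: "Ac \<in> carrier_mat n n" unfolding Ac_def using A by simp
  obtain as where cp: "char_poly Ac = (\<Prod>a\<leftarrow>as. [:- a, 1:])" and las: "length as = n"
    using char_poly_factorized[OF Ac] by auto
  define a where "a = hd as"
  have aas: "a \<in> set as" unfolding a_def using las n by (cases as, auto)
  have "poly (char_poly Ac) a = 0" unfolding cp poly_prod_list
    using aas by (auto simp: prod_list_zero_iff)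
  hence "eigenvalue Ac a" using eigenvalue_root_char_poly[OF Ac] by simp
  then obtain w where w: "w \<in> carrier_vec n" "w \<noteq> 0\<^sub>v n" "Ac *\<^sub>v w = a \<cdot>\<^sub>v w"
    unfolding eigenvalue_def eigenvector_def using Ac by auto
  define q where "q = (\<Sum>i<n. cnj (w$i) * (Ac *\<^sub>v w)$i)"
  define r where "r = (\<Sum>i<n. (cmod (w$i))^2)"
  have q1: "q = a * complex_of_real r"
  proof -
    have "q = (\<Sum>i<n. a * (cnj (w$i) * w$i))"
      unfolding q_def w(3) using w(1) by (intro sum.cong, auto)
    also have "\<dots> = a * (\<Sum>i<n. complex_of_real ((cmod (w$i))^2))"
      unfolding sum_distrib_left
    proof (intro sum.cong refl)
      fix i
      have "cnj (w$i) * w$i = complex_of_real ((cmod (w$i))^2)"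
        by (metis complex_norm_square mult.commute of_real_power)
      thus "a * (cnj (w$i) * w$i) = a * complex_of_real ((cmod (w$i))^2)" by simp
    qed
    finally show ?thesis unfolding r_def by simp
  qed
  have q2: "q = (\<Sum>i<n. \<Sum>j<n. cnj (w$i) * complex_of_real (A $$ (i,j)) * w$j)"
    unfolding q_def using w(1) A
    by (intro sum.cong, auto simp: Ac_def scalar_prod_def atLeast0LessThan sum_distrib_left mult.assoc)
  have "cnj q = (\<Sum>i<n. \<Sum>j<n. w$i * complex_of_real (A $$ (i,j)) * cnj (w$j))"
    unfolding q2 by (simp add: cnj_sum)
  also have "\<dots> = (\<Sum>j<n. \<Sum>i<n. w$i * complex_of_real (A $$ (i,j)) * cnj (w$j))"
    by (rule sum.swap)
  also have "\<dots> = (\<Sum>j<n. \<Sum>i<n. cnj (w$j) * complex_of_real (A $$ (j,i)) * w$i)"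
  proof (intro sum.cong refl)
    fix i j assume "j \<in> {..<n}" "i \<in> {..<n}"
    hence "A $$ (i,j) = A $$ (j,i)" using sym A by (metis carrier_matD index_transpose_mat(1) lessThan_iff)
    thus "w$i * complex_of_real (A $$ (i,j)) * cnj (w$j) = cnj (w$j) * complex_of_real (A $$ (j,i)) * w$i"
      by simp
  qed
  also have "\<dots> = q" unfolding q2 ..
  finally have "cnj q = q" .
  hence "Im (cnj q) = Im q" by simp
  hence Imq: "Im q = 0" by simp
  have r0: "r > 0"
  proof -
    obtain i where i: "i < n" "w$i \<noteq> 0" using w(1,2) by (metis eq_vecI carrier_vecD index_zero_vec)
    have "r \<ge> (cmod (w$i))^2" unfolding r_def
      by (rule member_le_sum, use i in auto)
    moreover have "(cmod (w$i))^2 > 0" using i by simp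
    ultimately show ?thesis by linarith
  qed
  have "Im q = Im a * r" unfolding q1 by simp
  hence Ima: "Im a = 0" using Imq r0 by simp
  define e where "e = Re a"
  have ae: "a = complex_of_real e" unfolding e_def using Ima by (simp add: complex_eq_iff)
  have "complex_of_real (poly (char_poly A) e) = poly (char_poly Ac) a"
    unfolding Ac_def ae of_real_hom.char_poly_hom[OF A] of_real_hom.poly_map_poly ..
  also have "\<dots> = 0" by fact
  finally have "poly (char_poly A) e = 0" by simp
  hence "eigenvalue A e" using eigenvalue_root_char_poly[OF A] by simp
  thus ?thesis unfolding eigenvalue_def eigenvector_def using A by auto
qed


lemma conjugate_real_vec[simp]: "conjugate (v :: real vec) = v"
  by (rule eq_vecI, auto simp: conjugate_real_def)

lemma scalar_prod_self_nonneg: "0 \<le> (v :: real vec) \<bullet> v"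
  unfolding scalar_prod_def by (auto intro: sum_nonneg)

lemma orthonormal_completion:
  fixes u :: "real vec"
  assumes u: "u \<in> carrier_vec n" and u0: "u \<noteq> 0\<^sub>v n"
  shows "\<exists>W. W \<in> carrier_mat n n \<and> transpose_mat W * W = 1\<^sub>m n \<and> col W 0 = (1 / sqrt (u \<bullet> u)) \<cdot>\<^sub>v u"
proof -
  interpret cof_vec_space n "TYPE(real)" .
  define b where "b = basis_completion u"
  note bc = basis_completion[OF u u0, folded b_def]
  have n0: "n \<noteq> 0" using u u0 by (auto intro!: eq_vecI)
  from bc(6,7) n0 obtain vs where bv: "b = u # vs" by (cases b, auto)
  define ws where "ws = gram_schmidt n b"
  note gs = gram_schmidt_result[OF bc(2) bc(4) bc(5) ws_def]
  have hdws: "hd ws = u" unfolding ws_def bv by (rule gram_schmidt_hd[OF u])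
  have lws: "length ws = n" using gs(4) bc(6) by simp
  have wsc: "i < n \<Longrightarrow> ws ! i \<in> carrier_vec n" for i using gs(3) lws by auto
  have orth: "i < n \<Longrightarrow> j < n \<Longrightarrow> (ws ! i \<bullet> ws ! j = 0) = (i \<noteq> j)" for i j
    using corthogonalD[OF gs(2), of i j] lws by simp
  have pos: "i < n \<Longrightarrow> ws ! i \<bullet> ws ! i > 0" for i
    using orth[of i i] scalar_prod_self_nonneg[of "ws ! i"] by linarith
  define us where "us = map (\<lambda>w. (1 / sqrt (w \<bullet> w)) \<cdot>\<^sub>v w) ws"
  have lus: "length us = n" unfolding us_def using lws by simp
  have usi: "i < n \<Longrightarrow> us ! i = (1 / sqrt (ws ! i \<bullet> ws ! i)) \<cdot>\<^sub>v ws ! i" for i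
    unfolding us_def using lws by simp
  have usc: "i < n \<Longrightarrow> us ! i \<in> carrier_vec n" for i using usi wsc by simp
  define W where "W = mat_of_cols n us"
  have Wc: "W \<in> carrier_mat n n" unfolding W_def using mat_of_cols_carrier(1)[of n us] lus by simp
  have colW: "i < n \<Longrightarrow> col W i = us ! i" for i unfolding W_def using lus usc by simp
  have "transpose_mat W * W = 1\<^sub>m n"
  proof (rule eq_matI)
    fix i j assume "i < dim_row (1\<^sub>m n :: real mat)" "j < dim_col (1\<^sub>m n :: real mat)"
    hence i: "i < n" and j: "j < n" by auto
    have "(transpose_mat W * W) $$ (i,j) = col W i \<bullet> col W j"
      using Wc i j by simp
    also have "\<dots> = (1 / sqrt (ws ! i \<bullet> ws ! i)) * (1 / sqrt (ws ! j \<bullet> ws ! j)) * (ws ! i \<bullet> ws ! j)"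
      unfolding colW[OF i] colW[OF j] usi[OF i] usi[OF j] using wsc[OF i] wsc[OF j] by simp
    also have "\<dots> = (if i = j then 1 else 0)"
    proof (cases "i = j")
      case True
      have "sqrt (ws ! i \<bullet> ws ! i) * sqrt (ws ! i \<bullet> ws ! i) = ws ! i \<bullet> ws ! i"
        using pos[OF i] by simp
      then show ?thesis using True pos[OF i] by (simp add: field_simps)
    next
      case False
      then show ?thesis using orth[OF i j] by simp
    qed
    also have "\<dots> = 1\<^sub>m n $$ (i,j)" using i j by simp
    finally show "(transpose_mat W * W) $$ (i,j) = 1\<^sub>m n $$ (i,j)" .
  qed (use Wc in auto)
  moreover have "col W 0 = (1 / sqrt (u \<bullet> u)) \<cdot>\<^sub>v u"
  proof -
    have "ws ! 0 = u" using hdws lws n0 by (cases ws, auto)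
    thus ?thesis using colW[of 0] usi[of 0] n0 by simp
  qed
  ultimately show ?thesis using Wc by blast
qed


lemma spectral:
  fixes A :: "real mat"
  shows "A \<in> carrier_mat n n \<Longrightarrow> transpose_mat A = A \<Longrightarrow>
    \<exists>U g. U \<in> carrier_mat n n \<and> transpose_mat U * U = 1\<^sub>m n \<and> A = U * diagm n g * transpose_mat U"
proof (induction n arbitrary: A)
  case 0
  show ?case
    by (rule exI[of _ "1\<^sub>m 0"], rule exI[of _ "\<lambda>_. 0"], use 0 in \<open>auto intro!: eq_matI\<close>)
next
  case (Suc m)
  note Ac = Suc.prems(1) and sym = Suc.prems(2)
  obtain e v where v: "v \<in> carrier_vec (Suc m)" "v \<noteq> 0\<^sub>v (Suc m)" "A *\<^sub>v v = e \<cdot>\<^sub>v v"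
    using real_sym_eigen[OF Ac sym] by auto
  obtain W where Wc: "W \<in> carrier_mat (Suc m) (Suc m)" and WtW: "transpose_mat W * W = 1\<^sub>m (Suc m)"
    and col0: "col W 0 = (1 / sqrt (v \<bullet> v)) \<cdot>\<^sub>v v"
    using orthonormal_completion[OF v(1,2)] by auto
  define c where "c = 1 / sqrt (v \<bullet> v)"
  have Au: "A *\<^sub>v col W 0 = e \<cdot>\<^sub>v col W 0"
    unfolding col0 c_def[symmetric] using v Ac by (auto intro!: eq_vecI simp: mult_mat_vec)
  have Wtc: "transpose_mat W \<in> carrier_mat (Suc m) (Suc m)" using Wc by simp
  have WWt: "W * transpose_mat W = 1\<^sub>m (Suc m)"
    by (rule mat_mult_left_right_inverse[OF Wtc Wc WtW])
  define A' where "A' = transpose_mat W * A * W"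
  have A'c: "A' \<in> carrier_mat (Suc m) (Suc m)" unfolding A'_def using Wc Ac by simp
  have A'sym: "transpose_mat A' = A'"
  proof -
    have "transpose_mat A' = transpose_mat W * transpose_mat (transpose_mat W * A)"
      unfolding A'_def by (rule transpose_mult[of _ "Suc m" "Suc m" _ "Suc m"], use Wc Ac in auto)
    also have "transpose_mat (transpose_mat W * A) = transpose_mat A * W"
      by (subst transpose_mult[of _ "Suc m" "Suc m" _ "Suc m"], use Wc Ac in auto)
    also have "transpose_mat W * (transpose_mat A * W) = A'" unfolding A'_def sym
      using Wc Ac by (simp add: assoc_mult_mat[of _ "Suc m" "Suc m" _ "Suc m" _ "Suc m"])
    finally show ?thesis .
  qed
  have A'col: "A' $$ (i, 0) = (if i = 0 then e else 0)" if i: "i < Suc m" for i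
  proof -
    have "A' = transpose_mat W * (A * W)" unfolding A'_def using Wc Ac by simp
    hence h0: "A' $$ (i,0) = row (transpose_mat W) i \<bullet> col (A * W) 0" using i Wc Ac by simp
    have r1: "row (transpose_mat W) i = col W i" using Wc i by simp
    have r2: "col (A * W) 0 = e \<cdot>\<^sub>v col W 0" using col_mult2[OF Ac Wc, of 0] Au by simp
    have "A' $$ (i,0) = col W i \<bullet> (e \<cdot>\<^sub>v col W 0)" using h0 unfolding r1 r2 .
    also have "\<dots> = e * (col W i \<bullet> col W 0)" using Wc i by simp
    also have "col W i \<bullet> col W 0 = (transpose_mat W * W) $$ (i,0)" using Wc i by simp
    also have "\<dots> = (if i = 0 then 1 else 0)" unfolding WtW using i by simp
    finally show ?thesis by simp
  qed
  have A'row: "A' $$ (0, j) = (if j = 0 then e else 0)" if j: "j < Suc m" for j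
  proof -
    have "A' $$ (0, j) = transpose_mat A' $$ (0, j)" using A'sym by simp
    also have "\<dots> = A' $$ (j, 0)" using A'c j by simp
    finally show ?thesis using A'col[OF j] by simp
  qed
  define A3 where "A3 = mat m m (\<lambda>(i,j). A' $$ (Suc i, Suc j))"
  have A3c: "A3 \<in> carrier_mat m m" unfolding A3_def by simp
  have A3sym: "transpose_mat A3 = A3"
  proof (rule eq_matI)
    fix i j assume "i < dim_row A3" "j < dim_col A3"
    hence i: "i < m" and j: "j < m" unfolding A3_def by auto
    have "A' $$ (Suc j, Suc i) = transpose_mat A' $$ (Suc i, Suc j)" using A'c i j by simp
    thus "transpose_mat A3 $$ (i,j) = A3 $$ (i,j)" unfolding A3_def using i j A'sym by simp
  qed (auto simp: A3_def)
  have A'blk: "A' = four_block_mat (mat 1 1 (\<lambda>_. e)) (0\<^sub>m 1 m) (0\<^sub>m m 1) A3"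
  proof (rule eq_matI)
    fix i j assume "i < dim_row (four_block_mat (mat 1 1 (\<lambda>_. e)) (0\<^sub>m 1 m) (0\<^sub>m m 1) A3)"
      "j < dim_col (four_block_mat (mat 1 1 (\<lambda>_. e)) (0\<^sub>m 1 m) (0\<^sub>m m 1) A3)"
    hence i: "i < Suc m" and j: "j < Suc m" unfolding A3_def by auto
    show "A' $$ (i,j) = four_block_mat (mat 1 1 (\<lambda>_. e)) (0\<^sub>m 1 m) (0\<^sub>m m 1) A3 $$ (i,j)"
    proof (cases "i = 0")
      case True
      then show ?thesis using A'row[OF j] i j by (cases "j = 0", auto simp: A3_def)
    next
      case False
      then obtain i' where i': "i = Suc i'" by (cases i, auto)
      show ?thesis
      proof (cases "j = 0")
        case True
        then show ?thesis using A'col[OF i] i' i by (auto simp: A3_def)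
      next
        case False
        then obtain j' where j': "j = Suc j'" by (cases j, auto)
        show ?thesis using i j i' j' by (auto simp: A3_def)
      qed
    qed
  qed (use A'c in \<open>auto simp: A3_def\<close>)
  obtain U3 g3 where U3c: "U3 \<in> carrier_mat m m" and U3o: "transpose_mat U3 * U3 = 1\<^sub>m m"
    and A3eq: "A3 = U3 * diagm m g3 * transpose_mat U3"
    using Suc.IH[OF A3c A3sym] by auto
  define Ub where "Ub = four_block_mat (1\<^sub>m 1) (0\<^sub>m 1 m) (0\<^sub>m m 1) U3"
  have Ubc: "Ub \<in> carrier_mat (Suc m) (Suc m)"
    using four_block_carrier_mat[OF one_carrier_mat[of 1] U3c, of "0\<^sub>m 1 m" "0\<^sub>m m 1"] unfolding Ub_def by simp
  have Ubt: "transpose_mat Ub = four_block_mat (1\<^sub>m 1) (0\<^sub>m 1 m) (0\<^sub>m m 1) (transpose_mat U3)"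
    unfolding Ub_def by (subst transpose_four_block_mat, use U3c in auto)
  have U3tc: "transpose_mat U3 \<in> carrier_mat m m" using U3c by simp
  have UbtUb: "transpose_mat Ub * Ub = 1\<^sub>m (Suc m)"
  proof -
    have "transpose_mat Ub * Ub = four_block_mat (1\<^sub>m 1 * 1\<^sub>m 1 + 0\<^sub>m 1 m * 0\<^sub>m m 1) (1\<^sub>m 1 * 0\<^sub>m 1 m + 0\<^sub>m 1 m * U3)
      (0\<^sub>m m 1 * 1\<^sub>m 1 + transpose_mat U3 * 0\<^sub>m m 1) (0\<^sub>m m 1 * 0\<^sub>m 1 m + transpose_mat U3 * U3)"
      unfolding Ubt unfolding Ub_def by (rule mult_four_block_mat, use U3c U3tc in auto)
    also have "\<dots> = four_block_mat (1\<^sub>m 1) (0\<^sub>m 1 m) (0\<^sub>m m 1) (1\<^sub>m m)"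
      unfolding U3o using U3c U3tc by simp
    also have "\<dots> = 1\<^sub>m (Suc m)" by simp
    finally show ?thesis .
  qed
  define g where "g = (\<lambda>i. if i = 0 then e else g3 (i - 1))"
  have Dblk: "diagm (Suc m) g = four_block_mat (mat 1 1 (\<lambda>_. e)) (0\<^sub>m 1 m) (0\<^sub>m m 1) (diagm m g3)"
    by (rule eq_matI, auto simp: diagm_def g_def)
  have D3c: "diagm m g3 \<in> carrier_mat m m" by simp
  have mid: "Ub * diagm (Suc m) g * transpose_mat Ub = A'"
  proof -
    have "Ub * diagm (Suc m) g = four_block_mat (1\<^sub>m 1 * mat 1 1 (\<lambda>_. e) + 0\<^sub>m 1 m * 0\<^sub>m m 1) (1\<^sub>m 1 * 0\<^sub>m 1 m + 0\<^sub>m 1 m * diagm m g3)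
      (0\<^sub>m m 1 * mat 1 1 (\<lambda>_. e) + U3 * 0\<^sub>m m 1) (0\<^sub>m m 1 * 0\<^sub>m 1 m + U3 * diagm m g3)"
      unfolding Ub_def Dblk by (rule mult_four_block_mat, use U3c D3c in auto)
    also have "\<dots> = four_block_mat (mat 1 1 (\<lambda>_. e)) (0\<^sub>m 1 m) (0\<^sub>m m 1) (U3 * diagm m g3)"
      using U3c D3c by simp
    finally have e1: "Ub * diagm (Suc m) g = four_block_mat (mat 1 1 (\<lambda>_. e)) (0\<^sub>m 1 m) (0\<^sub>m m 1) (U3 * diagm m g3)" .
    have UDc: "U3 * diagm m g3 \<in> carrier_mat m m" using U3c by simp
    have "Ub * diagm (Suc m) g * transpose_mat Ub = four_block_mat (mat 1 1 (\<lambda>_. e) * 1\<^sub>m 1 + 0\<^sub>m 1 m * 0\<^sub>m m 1)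
       (mat 1 1 (\<lambda>_. e) * 0\<^sub>m 1 m + 0\<^sub>m 1 m * transpose_mat U3)
      (0\<^sub>m m 1 * 1\<^sub>m 1 + (U3 * diagm m g3) * 0\<^sub>m m 1) (0\<^sub>m m 1 * 0\<^sub>m 1 m + (U3 * diagm m g3) * transpose_mat U3)"
      unfolding e1 Ubt by (rule mult_four_block_mat, use UDc U3tc in auto)
    also have "\<dots> = four_block_mat (mat 1 1 (\<lambda>_. e)) (0\<^sub>m 1 m) (0\<^sub>m m 1) A3"
    proof -
      have pc: "U3 * diagm m g3 * transpose_mat U3 \<in> carrier_mat m m"
        by (rule mult_carrier_mat[OF mult_carrier_mat[OF U3c diagm_carrier] U3tc])
      have z: "0\<^sub>m m m + U3 * diagm m g3 * transpose_mat U3 = U3 * diagm m g3 * transpose_mat U3"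
        by (rule left_add_zero_mat[OF pc])
      show ?thesis unfolding A3eq using UDc U3tc by (simp add: z)
    qed
    finally show ?thesis unfolding A'blk .
  qed
  define U where "U = W * Ub"
  have Uc: "U \<in> carrier_mat (Suc m) (Suc m)" unfolding U_def using Wc Ubc by simp
  have Ut: "transpose_mat U = transpose_mat Ub * transpose_mat W"
    unfolding U_def by (rule transpose_mult[OF Wc Ubc])
  have "transpose_mat U * U = transpose_mat Ub * (transpose_mat W * W) * Ub"
    unfolding Ut unfolding U_def using Wc Ubc by (simp add: assoc_mult_mat[of _ "Suc m" "Suc m" _ "Suc m" _ "Suc m"])
  also have "\<dots> = 1\<^sub>m (Suc m)" unfolding WtW using Ubc UbtUb by simp
  finally have UtU: "transpose_mat U * U = 1\<^sub>m (Suc m)" .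
  have Dc: "diagm (Suc m) g \<in> carrier_mat (Suc m) (Suc m)" by simp
  have Ubtc: "transpose_mat Ub \<in> carrier_mat (Suc m) (Suc m)" using Ubc by simp
  have "U * diagm (Suc m) g * transpose_mat U = W * (Ub * diagm (Suc m) g * transpose_mat Ub) * transpose_mat W"
  proof -
    have c1: "diagm (Suc m) g * transpose_mat Ub \<in> carrier_mat (Suc m) (Suc m)" by (rule mult_carrier_mat[OF Dc Ubtc])
    have c2: "Ub * (diagm (Suc m) g * transpose_mat Ub) \<in> carrier_mat (Suc m) (Suc m)" by (rule mult_carrier_mat[OF Ubc c1])
    show ?thesis
      unfolding Ut unfolding U_def using Wc Ubc Dc Ubtc Wtc c1 c2
      by (simp add: assoc_mult_mat[of _ "Suc m" "Suc m" _ "Suc m" _ "Suc m"])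
  qed
  also have "\<dots> = W * A' * transpose_mat W" unfolding mid ..
  also have "\<dots> = (W * transpose_mat W) * A * (W * transpose_mat W)"
    unfolding A'_def using Wc Wtc Ac by (simp add: assoc_mult_mat[of _ "Suc m" "Suc m" _ "Suc m" _ "Suc m"])
  also have "\<dots> = A" unfolding WWt using Ac by simp
  finally have "A = U * diagm (Suc m) g * transpose_mat U" by simp
  thus ?case using Uc UtU by blast
qed

lemma es_T:
  assumes A: "finite A" and l: "l \<in> A"
  shows "(\<Sum>i\<le>j. (-1)^i * es f A (j - i) * (f l)^i) = es f (A - {l}) j"
proof (induction j)
  case 0
  then show ?case using es_0 A by simp
next
  case (Suc j)
  have "(\<Sum>i\<le>Suc j. (-1)^i * es f A (Suc j - i) * (f l)^i)
      = es f A (Suc j) + (\<Sum>i\<le>j. (-1)^(Suc i) * es f A (Suc j - Suc i) * (f l)^(Suc i))"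
    by (subst sum.atMost_Suc_shift, simp)
  also have "(\<Sum>i\<le>j. (-1)^(Suc i) * es f A (Suc j - Suc i) * (f l)^(Suc i))
      = - f l * (\<Sum>i\<le>j. (-1)^i * es f A (j - i) * (f l)^i)"
    by (simp add: sum_distrib_left algebra_simps)
  also have "\<dots> = - f l * es f (A - {l}) j" using Suc by simp
  finally show ?case using es_rec[OF A l, of f j] by simp
qed

lemma quad_form:
  assumes M: "M \<in> carrier_mat n n" and X: "X \<in> carrier_vec n"
  shows "mat_inner M (outer X) = X \<bullet> (M *\<^sub>v X)"
proof -
  have ox: "outer X = mat n n (\<lambda>(i,j). X$i * X$j)" using X outer_eq by blast
  have "mat_inner M (outer X) = (\<Sum>p<n. (M * outer X) $$ (p,p))"
    unfolding mat_inner_def mat_trace_def using M by simp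
  also have "\<dots> = (\<Sum>p<n. X$p * (\<Sum>k<n. M $$ (p,k) * X$k))"
  proof (rule sum.cong[OF refl])
    fix p assume p: "p \<in> {..<n}"
    have "(M * outer X) $$ (p,p) = (\<Sum>k<n. M $$ (p,k) * (X$k * X$p))"
      using M p unfolding ox by (simp add: scalar_prod_def atLeast0LessThan)
    also have "\<dots> = X$p * (\<Sum>k<n. M $$ (p,k) * X$k)"
      by (simp add: sum_distrib_left algebra_simps)
    finally show "(M * outer X) $$ (p,p) = X$p * (\<Sum>k<n. M $$ (p,k) * X$k)" .
  qed
  also have "\<dots> = X \<bullet> (M *\<^sub>v X)"
    using M X by (simp add: scalar_prod_def atLeast0LessThan mult_mat_vec_def)
  finally show ?thesis .
qed

lemma smult_mat_vec:
  fixes A :: "real mat"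
  assumes "A \<in> carrier_mat nr nc" "v \<in> carrier_vec nc"
  shows "(k \<cdot>\<^sub>m A) *\<^sub>v v = k \<cdot>\<^sub>v (A *\<^sub>v v)"
  using assms by (intro eq_vecI) (auto simp: mult_mat_vec_def scalar_prod_def sum_distrib_left mult.assoc)

lemma foldr_qf:
  fixes S :: "real mat"
  assumes S: "S \<in> carrier_mat n n" and X: "X \<in> carrier_vec n"
  shows "foldr (\<lambda>i M. (c i) \<cdot>\<^sub>m (S ^\<^sub>m i) + M) xs (0\<^sub>m n n) \<in> carrier_mat n n \<and>
    X \<bullet> (foldr (\<lambda>i M. (c i) \<cdot>\<^sub>m (S ^\<^sub>m i) + M) xs (0\<^sub>m n n) *\<^sub>v X) = (\<Sum>i\<leftarrow>xs. c i * (X \<bullet> ((S ^\<^sub>m i) *\<^sub>v X)))"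
proof (induction xs)
  case Nil
  then show ?case using X by (simp add: scalar_prod_def)
next
  case (Cons x xs)
  define F where "F = foldr (\<lambda>i M. (c i) \<cdot>\<^sub>m (S ^\<^sub>m i) + M) xs (0\<^sub>m n n)"
  have Fc: "F \<in> carrier_mat n n" using Cons F_def by simp
  have Pc: "S ^\<^sub>m x \<in> carrier_mat n n" using S by simp
  have Pc': "c x \<cdot>\<^sub>m (S ^\<^sub>m x) \<in> carrier_mat n n" using Pc by simp
  have "foldr (\<lambda>i M. (c i) \<cdot>\<^sub>m (S ^\<^sub>m i) + M) (x # xs) (0\<^sub>m n n) = c x \<cdot>\<^sub>m (S ^\<^sub>m x) + F"
    unfolding F_def by simp
  moreover have "(c x \<cdot>\<^sub>m (S ^\<^sub>m x) + F) *\<^sub>v X = c x \<cdot>\<^sub>v ((S ^\<^sub>m x) *\<^sub>v X) + F *\<^sub>v X"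
    using add_mult_distrib_mat_vec[OF Pc' Fc X] Pc X by (simp add: smult_mat_vec[OF Pc X])
  moreover have "X \<bullet> (c x \<cdot>\<^sub>v ((S ^\<^sub>m x) *\<^sub>v X) + F *\<^sub>v X) = c x * (X \<bullet> ((S ^\<^sub>m x) *\<^sub>v X)) + X \<bullet> (F *\<^sub>v X)"
    using X Pc Fc by (simp add: scalar_prod_add_distrib[of X n])
  ultimately show ?case using Cons Fc Pc' unfolding F_def by simp
qed

lemma newton_T_qf:
  fixes S :: "real mat"
  assumes S: "S \<in> carrier_mat n n" and X: "X \<in> carrier_vec n"
  shows "mat_inner (newton_T j S) (outer X) = (\<Sum>i\<le>j. (-1)^i * sigma (j - i) S * (X \<bullet> ((S ^\<^sub>m i) *\<^sub>v X)))"
proof -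
  have dr: "dim_row S = n" using S by simp
  note fq = foldr_qf[OF S X, of "\<lambda>i. (-1)^i * sigma (j - i) S" "[0..<Suc j]"]
  have "mat_inner (newton_T j S) (outer X) = X \<bullet> (newton_T j S *\<^sub>v X)"
    by (rule quad_form[OF _ X], use fq in \<open>simp add: newton_T_def dr\<close>)
  also have "\<dots> = (\<Sum>i\<leftarrow>[0..<Suc j]. (-1)^i * sigma (j - i) S * (X \<bullet> ((S ^\<^sub>m i) *\<^sub>v X)))"
    using fq unfolding newton_T_def dr by (simp add: mult.assoc)
  also have "\<dots> = (\<Sum>i\<le>j. (-1)^i * sigma (j - i) S * (X \<bullet> ((S ^\<^sub>m i) *\<^sub>v X)))"
    by (subst sum_set_upt_conv_sum_list_nat[symmetric], rule sum.cong, auto)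
  finally show ?thesis .
qed

lemma diagm_mult: "diagm n f * diagm n h = diagm n (\<lambda>i. f i * h i)"
proof (rule eq_matI)
  fix i j assume "i < dim_row (diagm n (\<lambda>i. f i * h i))" "j < dim_col (diagm n (\<lambda>i. f i * h i))"
  hence i: "i < n" and j: "j < n" by auto
  have "(diagm n f * diagm n h) $$ (i,j) = (\<Sum>k<n. diagm n f $$ (i,k) * diagm n h $$ (k,j))"
    using i j by (simp add: scalar_prod_def atLeast0LessThan)
  also have "\<dots> = (\<Sum>k<n. if k = i then (if i = j then f i * h i else 0) else 0)"
    by (rule sum.cong, auto simp: diagm_def i j)
  also have "\<dots> = diagm n (\<lambda>i. f i * h i) $$ (i,j)" using i j by (simp add: diagm_def)
  finally show "(diagm n f * diagm n h) $$ (i,j) = diagm n (\<lambda>i. f i * h i) $$ (i,j)" .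
qed auto

lemma diagm_pow: "diagm n f ^\<^sub>m i = diagm n (\<lambda>l. f l ^ i)"
proof (induction i)
  case 0
  then show ?case by (auto intro!: eq_matI simp: diagm_def)
next
  case (Suc i)
  then show ?case by (simp add: diagm_mult mult.commute)
qed

lemma orth_pow:
  assumes U: "U \<in> carrier_mat n n" and UtU: "transpose_mat U * U = 1\<^sub>m n"
    and UUt: "U * transpose_mat U = 1\<^sub>m n" and B: "B \<in> carrier_mat n n"
  shows "(U * B * transpose_mat U) ^\<^sub>m i = U * (B ^\<^sub>m i) * transpose_mat U"
proof (induction i)
  case 0
  then show ?case using U B UUt by simp
next
  case (Suc i)
  have sqm: "\<And>P Q. P \<in> carrier_mat n n \<Longrightarrow> Q \<in> carrier_mat n n \<Longrightarrow> P * Q \<in> carrier_mat n n"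
    by (rule mult_carrier_mat)
  have Ut: "transpose_mat U \<in> carrier_mat n n" using U by simp
  have Bi: "B ^\<^sub>m i \<in> carrier_mat n n" using B by simp
  have "(U * B * transpose_mat U) ^\<^sub>m Suc i = U * (B ^\<^sub>m i) * transpose_mat U * (U * B * transpose_mat U)"
    using Suc by simp
  also have "\<dots> = U * ((B ^\<^sub>m i) * ((transpose_mat U * U) * (B * transpose_mat U)))"
    using U Ut Bi B by (simp add: sqm assoc_mult_mat[of _ n n _ n _ n])
  also have "\<dots> = U * (B ^\<^sub>m i * B) * transpose_mat U"
    unfolding UtU using U Ut Bi B by (simp add: sqm assoc_mult_mat[of _ n n _ n _ n])
  finally show ?case by simp
qed

lemma orth_qf:
  fixes U M :: "real mat"
  assumes U: "U \<in> carrier_mat n n" and M: "M \<in> carrier_mat n n" and X: "X \<in> carrier_vec n"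
  shows "X \<bullet> ((U * M * transpose_mat U) *\<^sub>v X) = (transpose_mat U *\<^sub>v X) \<bullet> (M *\<^sub>v (transpose_mat U *\<^sub>v X))"
proof -
  have Ut: "transpose_mat U \<in> carrier_mat n n" using U by simp
  have c1: "M * transpose_mat U \<in> carrier_mat n n" using M Ut by (rule mult_carrier_mat)
  have UM: "U * M \<in> carrier_mat n n" using U M by (rule mult_carrier_mat)
  have UtX: "transpose_mat U *\<^sub>v X \<in> carrier_vec n" using Ut X by simp
  have "(U * M * transpose_mat U) *\<^sub>v X = (U * M) *\<^sub>v (transpose_mat U *\<^sub>v X)"
    by (rule assoc_mult_mat_vec[OF UM Ut X])
  also have "\<dots> = U *\<^sub>v (M *\<^sub>v (transpose_mat U *\<^sub>v X))"
    by (rule assoc_mult_mat_vec[OF U M UtX])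
  finally have "(U * M * transpose_mat U) *\<^sub>v X = U *\<^sub>v (M *\<^sub>v (transpose_mat U *\<^sub>v X))" .
  moreover have "X \<bullet> (U *\<^sub>v (M *\<^sub>v (transpose_mat U *\<^sub>v X))) = (transpose_mat U *\<^sub>v X) \<bullet> (M *\<^sub>v (transpose_mat U *\<^sub>v X))"
    by (rule transpose_vec_mult_scalar[symmetric, OF U], use M Ut X in auto)
  ultimately show ?thesis by simp
qed

lemma diag_qf:
  assumes Y: "Y \<in> carrier_vec n"
  shows "Y \<bullet> (diagm n h *\<^sub>v Y) = (\<Sum>l<n. h l * (Y$l)^2)"
proof -
  have "diagm n h *\<^sub>v Y = vec n (\<lambda>l. h l * Y$l)"
  proof (rule eq_vecI)
    fix i assume "i < dim_vec (vec n (\<lambda>l. h l * Y$l))"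
    hence i: "i < n" by simp
    have "(diagm n h *\<^sub>v Y) $ i = (\<Sum>k<n. diagm n h $$ (i,k) * Y$k)"
      using i Y by (simp add: mult_mat_vec_def scalar_prod_def atLeast0LessThan)
    also have "\<dots> = (\<Sum>k<n. if k = i then h i * Y$i else 0)"
      by (rule sum.cong, auto simp: diagm_def i)
    finally show "(diagm n h *\<^sub>v Y) $ i = vec n (\<lambda>l. h l * Y$l) $ i" using i by simp
  qed simp
  thus ?thesis using Y by (simp add: scalar_prod_def atLeast0LessThan power2_eq_square algebra_simps)
qed

lemma outer_mult:
  fixes M :: "real mat"
  assumes M: "M \<in> carrier_mat n n" and Y: "Y \<in> carrier_vec n"
  shows "outer (M *\<^sub>v Y) = M * outer Y * transpose_mat M"
proof -
  have MY: "M *\<^sub>v Y \<in> carrier_vec n" using M Y by simp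
  show ?thesis
  proof (rule eq_matI)
    fix i j assume "i < dim_row (M * outer Y * transpose_mat M)" "j < dim_col (M * outer Y * transpose_mat M)"
    hence i: "i < n" and j: "j < n" using M Y by (auto simp: outer_eq)
    have r: "(M * outer Y) $$ (i,k) = (M *\<^sub>v Y)$i * Y$k" if k: "k < n" for k
    proof -
      have "(M * outer Y) $$ (i,k) = (\<Sum>p<n. M $$ (i,p) * (Y$p * Y$k))"
        using M Y i k by (simp add: outer_eq scalar_prod_def atLeast0LessThan)
      also have "\<dots> = (\<Sum>p<n. M $$ (i,p) * Y$p) * Y$k" by (subst sum_distrib_right) (simp add: mult.assoc)
      also have "\<dots> = (M *\<^sub>v Y)$i * Y$k" using M Y i by (simp add: mult_mat_vec_def scalar_prod_def atLeast0LessThan)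
      finally show ?thesis .
    qed
    have "(M * outer Y * transpose_mat M) $$ (i,j) = (\<Sum>k<n. (M * outer Y) $$ (i,k) * M $$ (j,k))"
      using M Y i j by (simp add: outer_eq scalar_prod_def atLeast0LessThan)
    also have "\<dots> = (\<Sum>k<n. (M *\<^sub>v Y)$i * Y$k * M $$ (j,k))" by (rule sum.cong, auto simp: r)
    also have "\<dots> = (M *\<^sub>v Y)$i * (\<Sum>k<n. M $$ (j,k) * Y$k)" by (simp add: sum_distrib_left algebra_simps)
    also have "\<dots> = (M *\<^sub>v Y)$i * (M *\<^sub>v Y)$j" using M Y j by (simp add: mult_mat_vec_def scalar_prod_def atLeast0LessThan)
    also have "\<dots> = outer (M *\<^sub>v Y) $$ (i,j)" using MY i j by (simp add: outer_eq)
    finally show "outer (M *\<^sub>v Y) $$ (i,j) = (M * outer Y * transpose_mat M) $$ (i,j)" by simp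
  qed (use M Y in \<open>auto simp: outer_eq[OF MY] outer_eq[OF Y]\<close>)
qed

lemma sigma_orth:
  assumes U: "U \<in> carrier_mat n n" and UtU: "transpose_mat U * U = 1\<^sub>m n"
    and UUt: "U * transpose_mat U = 1\<^sub>m n" and B: "B \<in> carrier_mat n n"
  shows "sigma j (U * B * transpose_mat U) = sigma j B"
proof -
  have Ut: "transpose_mat U \<in> carrier_mat n n" using U by simp
  have "similar_mat_wit (U * B * transpose_mat U) B U (transpose_mat U)"
    unfolding similar_mat_wit_def Let_def using U Ut B UtU UUt by auto
  hence "char_poly (U * B * transpose_mat U) = char_poly B"
    by (intro char_poly_similar, auto simp: similar_mat_def)
  moreover have "dim_row (U * B * transpose_mat U) = dim_row B" using U B by simp
  ultimately show ?thesis unfolding sigma_def by simp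
qed

theorem proposition3p5:
  fixes n k :: nat and a :: "real mat" and s :: real and X :: "real vec"
  assumes "symmetric_mat n a"
    and "1 \<le> k" and "k \<le> n"
    and "a \<in> Gamma_plus n k"
    and "s > 0"
    and "X \<in> carrier_vec n"
    and "sigma k (s \<cdot>\<^sub>m a - outer X) > 0"
  shows "s \<cdot>\<^sub>m a - outer X \<in> Gamma_plus n k
    \<and> (\<forall>i. 1 \<le> i \<and> i \<le> k \<longrightarrow>
          s powi (1 - int i) * sigma i (s \<cdot>\<^sub>m a - outer X)
            = s * sigma i a - mat_inner (newton_T (i - 1) a) (outer X))
    \<and> (\<forall>i. 2 \<le> i \<and> i \<le> k \<longrightarrow>
          sigma (i - 1) (s \<cdot>\<^sub>m a - outer X)
            \<ge> (s powi (1 - int i) * sigma i (s \<cdot>\<^sub>m a - outer X))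
               * inverse (sigma i a) * sigma (i - 1) a * s ^ (i - 2))"
proof -
  note Xc = assms(6) and s0 = assms(5)
  have ac: "a \<in> carrier_mat n n" and asym: "transpose_mat a = a"
    using assms(1) unfolding symmetric_mat_def by auto
  have gam: "\<And>j. 1 \<le> j \<Longrightarrow> j \<le> k \<Longrightarrow> sigma j a > 0"
    using assms(4) unfolding Gamma_plus_def by auto
  obtain U lam where Uc: "U \<in> carrier_mat n n" and UtU: "transpose_mat U * U = 1\<^sub>m n"
    and aeq: "a = U * diagm n lam * transpose_mat U"
    using spectral[OF ac asym] by auto
  have Utc: "transpose_mat U \<in> carrier_mat n n" using Uc by simp
  have UUt: "U * transpose_mat U = 1\<^sub>m n"
    by (rule mat_mult_left_right_inverse[OF Utc Uc UtU])
  define Y where "Y = transpose_mat U *\<^sub>v X"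
  have Yc: "Y \<in> carrier_vec n" unfolding Y_def using Utc Xc by simp
  have XY: "X = U *\<^sub>v Y" unfolding Y_def
    using assoc_mult_mat_vec[OF Uc Utc Xc] UUt Xc by simp
  define e where "e = (\<lambda>j. es lam {..<n} j)"
  define el where "el = (\<lambda>l j. es lam ({..<n} - {l}) j)"
  define Z where "Z = (\<lambda>j. \<Sum>l<n. (Y$l)^2 * el l j)"
  have sa: "sigma j a = e j" for j
  proof (cases "j \<le> n")
    case True
    have "sigma j a = sigma j (diagm n lam)" unfolding aeq by (rule sigma_orth[OF Uc UtU UUt diagm_carrier])
    also have "\<dots> = e j" unfolding e_def by (rule sigma_diag[OF True])
    finally show ?thesis .
  next
    case False
    have "sigma j a = 0" unfolding sigma_def using False ac by simp
    moreover have "e j = 0" unfolding e_def using es_big[of "{..<n}" j lam] False by simp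
    ultimately show ?thesis by simp
  qed
  define E' where "E' = diagm n (\<lambda>i. s * lam i) - outer Y"
  have oY: "outer Y \<in> carrier_mat n n" using Yc by (simp add: outer_eq)
  have E'c: "E' \<in> carrier_mat n n" unfolding E'_def by (rule minus_carrier_mat[OF oY])
  have Eeq: "s \<cdot>\<^sub>m a - outer X = U * E' * transpose_mat U"
  proof -
    have "outer X = U * outer Y * transpose_mat U" unfolding XY by (rule outer_mult[OF Uc Yc])
    moreover have "s \<cdot>\<^sub>m a = U * diagm n (\<lambda>i. s * lam i) * transpose_mat U"
    proof -
      have "s \<cdot>\<^sub>m diagm n lam = diagm n (\<lambda>i. s * lam i)" by (rule eq_matI, auto simp: diagm_def)
      moreover have "s \<cdot>\<^sub>m a = U * (s \<cdot>\<^sub>m diagm n lam) * transpose_mat U"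
        unfolding aeq using Uc Utc
        by (simp add: mult_smult_distrib[of _ n n _ n] mult_smult_assoc_mat[of _ n n _ n])
      ultimately show ?thesis by simp
    qed
    moreover have "U * diagm n (\<lambda>i. s * lam i) * transpose_mat U - U * outer Y * transpose_mat U = U * E' * transpose_mat U"
    proof -
      have "U * E' = U * diagm n (\<lambda>i. s * lam i) - U * outer Y"
        unfolding E'_def by (rule mult_minus_distrib_mat[OF Uc diagm_carrier oY])
      hence "U * E' * transpose_mat U = (U * diagm n (\<lambda>i. s * lam i) - U * outer Y) * transpose_mat U" by simp
      also have "\<dots> = U * diagm n (\<lambda>i. s * lam i) * transpose_mat U - U * outer Y * transpose_mat U"
        by (rule minus_mult_distrib_mat[of _ n n], use Uc oY Utc in auto)
      finally show ?thesis by simp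
    qed
    ultimately show ?thesis by simp
  qed
  have sE: "sigma i (s \<cdot>\<^sub>m a - outer X) = s^i * e i - s^(i-1) * Z (i - 1)" if i: "1 \<le> i" "i \<le> n" for i
  proof -
    have "sigma i (s \<cdot>\<^sub>m a - outer X) = sigma i E'" unfolding Eeq by (rule sigma_orth[OF Uc UtU UUt E'c])
    also have "\<dots> = es (\<lambda>i. s * lam i) {..<n} i - (\<Sum>l<n. (Y$l)^2 * es (\<lambda>i. s * lam i) ({..<n} - {l}) (i - 1))"
      unfolding E'_def by (rule sigma_diag_rank1[OF Yc i])
    also have "\<dots> = s^i * e i - s^(i-1) * Z (i - 1)"
      unfolding e_def Z_def el_def es_scale[OF finite_lessThan] es_scale[OF finite_Diff[OF finite_lessThan]]
      by (simp add: sum_distrib_left algebra_simps)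
    finally show ?thesis .
  qed
  have hT: "mat_inner (newton_T j a) (outer X) = Z j" for j
  proof -
    have "mat_inner (newton_T j a) (outer X) = (\<Sum>i\<le>j. (-1)^i * sigma (j - i) a * (X \<bullet> ((a ^\<^sub>m i) *\<^sub>v X)))"
      by (rule newton_T_qf[OF ac Xc])
    also have "\<dots> = (\<Sum>i\<le>j. (-1)^i * e (j - i) * (\<Sum>l<n. lam l ^ i * (Y$l)^2))"
    proof (rule sum.cong[OF refl])
      fix i
      have "a ^\<^sub>m i = U * (diagm n lam ^\<^sub>m i) * transpose_mat U"
        unfolding aeq by (rule orth_pow[OF Uc UtU UUt diagm_carrier])
      hence "X \<bullet> ((a ^\<^sub>m i) *\<^sub>v X) = Y \<bullet> (diagm n (\<lambda>l. lam l ^ i) *\<^sub>v Y)"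
        unfolding Y_def diagm_pow using orth_qf[OF Uc diagm_carrier Xc] by simp
      also have "\<dots> = (\<Sum>l<n. lam l ^ i * (Y$l)^2)" by (rule diag_qf[OF Yc])
      finally show "(-1)^i * sigma (j - i) a * (X \<bullet> ((a ^\<^sub>m i) *\<^sub>v X)) = (-1)^i * e (j - i) * (\<Sum>l<n. lam l ^ i * (Y$l)^2)"
        unfolding sa by simp
    qed
    also have "\<dots> = (\<Sum>l<n. (Y$l)^2 * (\<Sum>i\<le>j. (-1)^i * e (j - i) * lam l ^ i))"
      by (simp add: sum_distrib_left sum_distrib_right sum.swap[of _ "{..j}"] algebra_simps)
    also have "\<dots> = Z j" unfolding Z_def el_def e_def
      by (rule sum.cong[OF refl], subst es_T, auto)
    finally show ?thesis .
  qed
  have c2: "s powi (1 - int i) * sigma i (s \<cdot>\<^sub>m a - outer X) = s * e i - Z (i - 1)"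
    if i: "1 \<le> i" "i \<le> n" for i
  proof -
    have p: "s powi (1 - int i) = s / s^i"
      using s0 by (simp add: power_int_diff)
    have si: "s^i = s * s^(i-1)" using i by (cases i, auto)
    show ?thesis unfolding sE[OF i] p using s0 si by (simp add: field_simps)
  qed
  have key: "e (i - 1) * Z (i - 1) - e i * Z (i - 2) \<ge> 0" if i: "2 \<le> i" for i
  proof -
    obtain j where ij: "i = Suc (Suc j)" using i by (cases i; cases "i - 1", auto)
    have "e (i - 1) * Z (i - 1) - e i * Z (i - 2) = (\<Sum>l<n. (Y$l)^2 * (e (Suc j) * el l (Suc j) - e (Suc (Suc j)) * el l j))"
      unfolding Z_def ij by (simp add: sum_distrib_left sum_subtractf algebra_simps)
    also have "\<dots> \<ge> 0"
    proof (rule sum_nonneg)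
      fix l assume l: "l \<in> {..<n}"
      have r1: "e (Suc j) = el l (Suc j) + lam l * el l j"
        unfolding e_def el_def by (rule es_rec, use l in auto)
      have r2: "e (Suc (Suc j)) = el l (Suc (Suc j)) + lam l * el l (Suc j)"
        unfolding e_def el_def by (rule es_rec, use l in auto)
      have nw: "el l j * el l (j + 2) \<le> (el l (j + 1))^2"
        unfolding el_def by (rule newton_es, simp)
      have "e (Suc j) * el l (Suc j) - e (Suc (Suc j)) * el l j = (el l (Suc j))^2 - el l j * el l (Suc (Suc j))"
        unfolding r1 r2 by (simp add: power2_eq_square algebra_simps)
      also have "\<dots> \<ge> 0" using nw by (simp add: numeral_2_eq_2)
      finally show "0 \<le> (Y$l)^2 * (e (Suc j) * el l (Suc j) - e (Suc (Suc j)) * el l j)" by simp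
    qed
    finally show ?thesis .
  qed
  have c3: "sigma (i - 1) (s \<cdot>\<^sub>m a - outer X)
      \<ge> (s powi (1 - int i) * sigma i (s \<cdot>\<^sub>m a - outer X)) * inverse (sigma i a) * sigma (i - 1) a * s ^ (i - 2)"
    if i: "2 \<le> i" "i \<le> k" for i
  proof -
    have in1: "1 \<le> i" "i \<le> n" using i assms(3) by auto
    have in2: "1 \<le> i - 1" "i - 1 \<le> n" using i assms(3) by auto
    have ei: "e i > 0" using gam[of i] i sa by simp
    have s2: "s^(i-2) > 0" using s0 by simp
    have sm: "s^(i-1) = s * s^(i-2)" using i by (cases i; cases "i - 1", auto)
    have A: "sigma (i - 1) (s \<cdot>\<^sub>m a - outer X) = s^(i-2) * (s * e (i - 1) - Z (i - 2))"
      unfolding sE[OF in2] sm using i by (simp add: algebra_simps numeral_2_eq_2 diff_diff_add)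
    have B: "(s powi (1 - int i) * sigma i (s \<cdot>\<^sub>m a - outer X)) * inverse (sigma i a) * sigma (i - 1) a * s ^ (i - 2)
        = s^(i-2) * ((s * e i - Z (i - 1)) * e (i - 1) / e i)"
      unfolding c2[OF in1] sa by (simp add: field_simps)
    have C: "(s * e i - Z (i - 1)) * e (i - 1) / e i \<le> s * e (i - 1) - Z (i - 2)"
    proof -
      have "(s * e i - Z (i - 1)) * e (i - 1) \<le> (s * e (i - 1) - Z (i - 2)) * e i"
        using key[OF i(1)] by (simp add: algebra_simps)
      thus ?thesis using ei by (simp add: divide_le_eq)
    qed
    have C': "s^(i-2) * ((s * e i - Z (i - 1)) * e (i - 1) / e i) \<le> s^(i-2) * (s * e (i - 1) - Z (i - 2))"
      by (rule mult_left_mono[OF C], use s2 in simp)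
    show ?thesis unfolding A B by (rule C')
  qed
  have pos: "\<forall>d. d < k \<longrightarrow> sigma (k - d) (s \<cdot>\<^sub>m a - outer X) > 0"
  proof (intro allI)
    fix d show "d < k \<longrightarrow> sigma (k - d) (s \<cdot>\<^sub>m a - outer X) > 0"
    proof (induction d)
      case 0
      then show ?case using assms(7) by simp
    next
      case (Suc d)
      show ?case
      proof
        assume d: "Suc d < k"
        define i where "i = k - d"
        have i2: "2 \<le> i" "i \<le> k" unfolding i_def using d by auto
        have in1: "1 \<le> i" "i \<le> n" using i2 assms(3) by auto
        have sEi: "sigma i (s \<cdot>\<^sub>m a - outer X) > 0" using Suc d unfolding i_def by simp
        have pw: "s powi (1 - int i) > 0" using s0 by simp
        have f: "s powi (1 - int i) * sigma i (s \<cdot>\<^sub>m a - outer X) > 0" using pw sEi by simp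
        have g1: "inverse (sigma i a) > 0" using gam[OF in1(1) i2(2)] by simp
        have g2: "sigma (i - 1) a > 0" using gam[of "i - 1"] i2 by simp
        have g3: "s ^ (i - 2) > 0" using s0 by simp
        have "(s powi (1 - int i) * sigma i (s \<cdot>\<^sub>m a - outer X)) * inverse (sigma i a) * sigma (i - 1) a * s ^ (i - 2) > 0"
          using f g1 g2 g3 by simp
        hence "sigma (i - 1) (s \<cdot>\<^sub>m a - outer X) > 0" using c3[OF i2] by linarith
        moreover have "i - 1 = k - Suc d" unfolding i_def by simp
        ultimately show "sigma (k - Suc d) (s \<cdot>\<^sub>m a - outer X) > 0" by simp
      qed
    qed
  qed
  have oX: "outer X \<in> carrier_mat n n" using Xc by (simp add: outer_eq)
  have Ec: "s \<cdot>\<^sub>m a - outer X \<in> carrier_mat n n" by (rule minus_carrier_mat[OF oX])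
  have G: "s \<cdot>\<^sub>m a - outer X \<in> Gamma_plus n k"
    unfolding Gamma_plus_def
  proof (intro CollectI conjI Ec allI impI)
    fix j assume j: "1 \<le> j \<and> j \<le> k"
    hence "k - j < k" "k - (k - j) = j" by auto
    thus "sigma j (s \<cdot>\<^sub>m a - outer X) > 0" using pos by metis
  qed
  show ?thesis
  proof (intro conjI allI impI)
    show "s \<cdot>\<^sub>m a - outer X \<in> Gamma_plus n k" by (rule G)
  next
    fix i assume i: "1 \<le> i \<and> i \<le> k"
    hence in1: "1 \<le> i" "i \<le> n" using assms(3) by auto
    show "s powi (1 - int i) * sigma i (s \<cdot>\<^sub>m a - outer X) = s * sigma i a - mat_inner (newton_T (i - 1) a) (outer X)"
      unfolding c2[OF in1] sa hT ..
  next
    fix i assume i: "2 \<le> i \<and> i \<le> k"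
    thus "sigma (i - 1) (s \<cdot>\<^sub>m a - outer X)
      \<ge> (s powi (1 - int i) * sigma i (s \<cdot>\<^sub>m a - outer X)) * inverse (sigma i a) * sigma (i - 1) a * s ^ (i - 2)"
      using c3 by blast
  qed
qed

end
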